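(* Let $s\in(0,1)$ and $p>1$ with $sp<1$, and let $T\in\mathbb{N}$. Let $\mathbf{X}\in\mathbb{X}_T$ and $i\in\{1,\dots,T\}$ be such that the multiplicity $m_i=\#\{j\in\{1,\dots,T\}: x_j=x_i\}$ satisfies $m_i>1$. Then \[ \partial^+_{x_i}\mathcal{F}^s_p[\mathbf{X}]=-\infty\qquad\text{and}\qquad \partial^-_{x_i}\mathcal{F}^s_p[\mathbf{X}]=+\infty, \] where $\partial^\pm_{x_i}\mathcal{F}^s_p[\mathbf{X}]=\lim_{h\to0^\pm}\frac{\mathcal{F}^s_p[\mathbf{X}+he_i]-\mathcal{F}^s_p[\mathbf{X}]}{h}$.
   Context: One-dimensional setting. Let $T\in\mathbb{N}$. A configuration is a set $\mathbf{X}=\bigcup_{k\in\mathbb{Z}}(\bar{\mathbf{X}}+kT)$ with $\bar{\mathbf{X}}=(x_1,\dots,x_T)\in[0,T)^T$, $x_i\le x_j$ for $i<j$ (points counted with multiplicity); $\mathbb{X}_T$ is the set of configurations. For $\mathbf{X}\in\mathbb{X}_T$, $u[\mathbf{X}]$ is the $T$-periodic function (defined up to an additive constant) with distributional derivative $\mathrm{D}u[\mathbf{X}]=\mathcal{L}^1-\sum_{x\in\mathbf{X}}\delta_x$ (multiplicities counted), i.e. slope $1$ with downward jumps equal to the multiplicity at each point. $\mathcal{F}^s_p[\mathbf{X}]=\int_0^T\int_{\mathbb{R}}\frac{|u[\mathbf{X}](x)-u[\mathbf{X}](y)|^p}{|x-y|^{1+sp}}\,\mathrm{d}y\,\mathrm{d}x$.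 The rigid variation $\mathbf{X}+he_i$ is the configuration obtained by replacing the single point $x_i$ with $x_i+h$ (and each $x_i+kT$ with $x_i+h+kT$), all other points unchanged. *)

theory Defs
  imports "HOL-Analysis.Analysis"
begin

text \<open>A configuration in X_T is given by its representative points x 1, ..., x T
  (a function on indices; only indices 1..T matter). The T-periodic function u[X]
  with distributional derivative Lebesgue measure minus the sum of Dirac masses at the
  points of X (with multiplicity), normalised (right-continuous) up to an additive constant.\<close>

definition u_conf :: "nat \<Rightarrow> (nat \<Rightarrow> real) \<Rightarrow> real \<Rightarrow> real" where
  "u_conf T x y = y - (\<Sum>j\<in>{1..T}. real_of_int \<lfloor>(y - x j) / real T\<rfloor>)"

text \<open>The Gagliardo-type energy F^s_p[X] (finite when s p < 1).\<close>

definition F_energy :: "real \<Rightarrow> real \<Rightarrow> nat \<Rightarrow> (nat \<Rightarrow> real) \<Rightarrow> real" where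
  "F_energy s p T x = enn2real
     (\<integral>\<^sup>+ t\<in>{0..<real T}. (\<integral>\<^sup>+ y. ennreal (\<bar>u_conf T x t - u_conf T x y\<bar> powr p
          / \<bar>t - y\<bar> powr (1 + s * p)) \<partial>lborel) \<partial>lborel)"

definition rigid_var :: "(nat \<Rightarrow> real) \<Rightarrow> nat \<Rightarrow> real \<Rightarrow> (nat \<Rightarrow> real)" where
  "rigid_var x i h = x(i := x i + h)"

end

theory Submission
  imports Defs "HOL-Real_Asymp.Real_Asymp"
begin


lemma nn_shift:
  fixes f :: "real \<Rightarrow> ennreal"
  assumes [measurable]: "f \<in> borel_measurable borel"
  shows "(\<integral>\<^sup>+x. f x \<partial>lborel) = (\<integral>\<^sup>+x. f (x + c) \<partial>lborel)"
  using nn_integral_real_affine[OF assms, of 1 c] by (simp add: add.commute)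

lemma nn_reflect:
  fixes f :: "real \<Rightarrow> ennreal"
  assumes [measurable]: "f \<in> borel_measurable borel"
  shows "(\<integral>\<^sup>+x. f x \<partial>lborel) = (\<integral>\<^sup>+x. f (- x) \<partial>lborel)"
  using nn_integral_real_affine[OF assms, of "-1" 0] by simp

lemma powr_int0:
  assumes "e > -1" "R \<ge> 0"
  shows "(\<integral>\<^sup>+z. ennreal (\<bar>z\<bar> powr e) * indicator {0..R} z \<partial>lborel) < \<infinity>"
proof -
  have "(\<integral>\<^sup>+z. ennreal (\<bar>z\<bar> powr e) * indicator {0..R} z \<partial>lborel)
      = (\<integral>\<^sup>+z. ennreal (z powr e) * indicator {0..R} z \<partial>lborel)"
    by (intro nn_integral_cong) (auto simp: indicator_def)
  also have "\<dots> = ennreal (R powr (e+1) / (e+1))"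
    by (rule nn_integral_has_integral_lebesgue'[OF _ has_integral_powr_from_0[OF assms]]) simp
  finally show ?thesis by simp
qed

lemma powr_int_sym:
  assumes "e > -1" "R \<ge> 0"
  shows "(\<integral>\<^sup>+z. ennreal (\<bar>z\<bar> powr e) * indicator {-R..R} z \<partial>lborel) < \<infinity>"
proof -
  have "(\<integral>\<^sup>+z. ennreal (\<bar>z\<bar> powr e) * indicator {-R..R} z \<partial>lborel)
     \<le> (\<integral>\<^sup>+z. ennreal (\<bar>z\<bar> powr e) * indicator {0..R} z + ennreal (\<bar>z\<bar> powr e) * indicator {0..R} (-z) \<partial>lborel)"
    by (intro nn_integral_mono) (auto simp: indicator_def)
  also have "\<dots> = (\<integral>\<^sup>+z. ennreal (\<bar>z\<bar> powr e) * indicator {0..R} z \<partial>lborel) + (\<integral>\<^sup>+z. ennreal (\<bar>z\<bar> powr e) * indicator {0..R} (-z) \<partial>lborel)"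
    by (intro nn_integral_add) auto
  also have "(\<integral>\<^sup>+z. ennreal (\<bar>z\<bar> powr e) * indicator {0..R} (-z) \<partial>lborel) = (\<integral>\<^sup>+z. ennreal (\<bar>z\<bar> powr e) * indicator {0..R} z \<partial>lborel)"
    by (subst nn_reflect) auto
  finally show ?thesis using powr_int0[OF assms] by (simp add: ennreal_add_eq_top order_le_less_trans)
qed

lemma powr_int_local:
  assumes "e > -1"
  shows "(\<integral>\<^sup>+y. ennreal (\<bar>y - b\<bar> powr e) * indicator {c..d} y \<partial>lborel) < \<infinity>"
proof -
  define R where "R = \<bar>c - b\<bar> + \<bar>d - b\<bar>"
  have "(\<integral>\<^sup>+y. ennreal (\<bar>y - b\<bar> powr e) * indicator {c..d} y \<partial>lborel)
     \<le> (\<integral>\<^sup>+y. ennreal (\<bar>y - b\<bar> powr e) * indicator {-R..R} (y - b) \<partial>lborel)"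
    by (intro nn_integral_mono) (auto simp: indicator_def R_def)
  also have "\<dots> = (\<integral>\<^sup>+y. ennreal (\<bar>y\<bar> powr e) * indicator {-R..R} y \<partial>lborel)"
    by (subst nn_shift[where c = "-b"]) auto
  finally show ?thesis using powr_int_sym[OF assms, of R] by (simp add: R_def order_le_less_trans)
qed

lemma powr_int_inf0:
  assumes "e < -1" "r > 0"
  shows "(\<integral>\<^sup>+z. ennreal (\<bar>z\<bar> powr e) * indicator {r..} z \<partial>lborel) < \<infinity>"
proof -
  have "(\<integral>\<^sup>+z. ennreal (\<bar>z\<bar> powr e) * indicator {r..} z \<partial>lborel)
      = (\<integral>\<^sup>+z. ennreal (z powr e) * indicator {r..} z \<partial>lborel)"
    using assms by (intro nn_integral_cong) (auto simp: indicator_def)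
  also have "\<dots> = ennreal (-(r powr (e+1)) / (e+1))"
    by (rule nn_integral_has_integral_lebesgue'[OF _ has_integral_powr_to_inf[OF assms]]) simp
  finally show ?thesis by simp
qed

lemma powr_int_inf:
  assumes "e < -1" "r > 0"
  shows "(\<integral>\<^sup>+z. ennreal (\<bar>z\<bar> powr e) * indicator {z. r \<le> \<bar>z\<bar>} z \<partial>lborel) < \<infinity>"
proof -
  have "(\<integral>\<^sup>+z. ennreal (\<bar>z\<bar> powr e) * indicator {z. r \<le> \<bar>z\<bar>} z \<partial>lborel)
     \<le> (\<integral>\<^sup>+z. ennreal (\<bar>z\<bar> powr e) * indicator {r..} z + ennreal (\<bar>z\<bar> powr e) * indicator {r..} (-z) \<partial>lborel)"
    by (intro nn_integral_mono) (auto simp: indicator_def)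
  also have "\<dots> = (\<integral>\<^sup>+z. ennreal (\<bar>z\<bar> powr e) * indicator {r..} z \<partial>lborel) + (\<integral>\<^sup>+z. ennreal (\<bar>z\<bar> powr e) * indicator {r..} (-z) \<partial>lborel)"
    by (intro nn_integral_add) auto
  also have "(\<integral>\<^sup>+z. ennreal (\<bar>z\<bar> powr e) * indicator {r..} (-z) \<partial>lborel) = (\<integral>\<^sup>+z. ennreal (\<bar>z\<bar> powr e) * indicator {r..} z \<partial>lborel)"
    by (subst nn_reflect) auto
  finally show ?thesis using powr_int_inf0[OF assms] by (simp add: ennreal_add_eq_top order_le_less_trans)
qed



lemma periodic_int:
  fixes \<phi> :: "real \<Rightarrow> ennreal"
  assumes [measurable]: "\<phi> \<in> borel_measurable borel" and T: "T > 0" and per: "\<And>t. \<phi> (t + T) = \<phi> t"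
  shows "(\<integral>\<^sup>+t. \<phi> t * indicator {c..<c+T} t \<partial>lborel) = (\<integral>\<^sup>+t. \<phi> t * indicator {0..<T} t \<partial>lborel)"
proof -
  have pn: "\<phi> (t + real n * T) = \<phi> t" for t n
    by (induction n arbitrary: t) (auto simp: distrib_right add.assoc[symmetric] per)
  have pi: "\<phi> (t + real_of_int k * T) = \<phi> t" for t k
  proof (cases "k \<ge> 0")
    case True then show ?thesis using pn[of t "nat k"] by simp
  next
    case False
    have "\<phi> (t + real_of_int k * T) = \<phi> (t + real_of_int k * T + real (nat (-k)) * T)" by (rule pn[symmetric])
    also have "\<dots> = \<phi> t" using False by simp
    finally show ?thesis .
  qed
  define n where "n = \<lfloor>c / T\<rfloor>"
  define r where "r = c - real_of_int n * T"
  have r0: "0 \<le> r" and rT: "r < T"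
  proof -
    have "real_of_int n \<le> c / T" "c / T < real_of_int n + 1" unfolding n_def by linarith+
    then show "0 \<le> r" "r < T" using T unfolding r_def by (auto simp: field_simps)
  qed
  have "(\<integral>\<^sup>+t. \<phi> t * indicator {c..<c+T} t \<partial>lborel)
      = (\<integral>\<^sup>+t. \<phi> (t + real_of_int n * T) * indicator {c..<c+T} (t + real_of_int n * T) \<partial>lborel)"
    by (rule nn_shift) measurable
  also have "\<dots> = (\<integral>\<^sup>+t. \<phi> t * indicator {r..<r+T} t \<partial>lborel)"
    by (intro nn_integral_cong) (auto simp: pi r_def indicator_def)
  also have "\<dots> = (\<integral>\<^sup>+t. \<phi> t * indicator {r..<T} t + \<phi> t * indicator {T..<T+r} t \<partial>lborel)"
    using r0 rT by (intro nn_integral_cong) (auto simp: indicator_def)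
  also have "\<dots> = (\<integral>\<^sup>+t. \<phi> t * indicator {r..<T} t \<partial>lborel) + (\<integral>\<^sup>+t. \<phi> t * indicator {T..<T+r} t \<partial>lborel)"
    by (rule nn_integral_add) auto
  also have "(\<integral>\<^sup>+t. \<phi> t * indicator {T..<T+r} t \<partial>lborel) = (\<integral>\<^sup>+t. \<phi> (t + T) * indicator {T..<T+r} (t + T) \<partial>lborel)"
    by (rule nn_shift) measurable
  also have "\<dots> = (\<integral>\<^sup>+t. \<phi> t * indicator {0..<r} t \<partial>lborel)"
    by (intro nn_integral_cong) (auto simp: per indicator_def)
  also have "(\<integral>\<^sup>+t. \<phi> t * indicator {r..<T} t \<partial>lborel) + (\<integral>\<^sup>+t. \<phi> t * indicator {0..<r} t \<partial>lborel)
      = (\<integral>\<^sup>+t. \<phi> t * indicator {r..<T} t + \<phi> t * indicator {0..<r} t \<partial>lborel)"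
    by (rule nn_integral_add[symmetric]) auto
  also have "\<dots> = (\<integral>\<^sup>+t. \<phi> t * indicator {0..<T} t \<partial>lborel)"
    using r0 rT by (intro nn_integral_cong) (auto simp: indicator_def)
  finally show ?thesis .
qed

lemma swap_sym:
  fixes G :: "real \<Rightarrow> real \<Rightarrow> ennreal"
  assumes Gm[measurable]: "case_prod G \<in> borel_measurable (lborel \<Otimes>\<^sub>M lborel)" and T: "T > 0"
    and per: "\<And>t y. G (t + T) (y + T) = G t y"
  shows "(\<integral>\<^sup>+t. (\<integral>\<^sup>+y. G t y \<partial>lborel) * indicator {0..<T} t \<partial>lborel)
       = (\<integral>\<^sup>+t. (\<integral>\<^sup>+y. G y t \<partial>lborel) * indicator {0..<T} t \<partial>lborel)"
proof -
  have m1: "(\<lambda>(t, z). G (t + a * z) (b * t + z)) \<in> borel_measurable (lborel \<Otimes>\<^sub>M lborel)" for a b :: real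
  proof -
    have "(\<lambda>(t::real, z::real). (t + a * z, b * t + z)) \<in> measurable (lborel \<Otimes>\<^sub>M lborel) (lborel \<Otimes>\<^sub>M lborel)"
      by measurable
    from measurable_comp[OF this Gm] show ?thesis by (simp add: o_def case_prod_unfold)
  qed
  have mG2: "G t \<in> borel_measurable borel" for t
    using measurable_Pair2[OF Gm, of t] by (simp cong: measurable_cong_sets)
  have mG1: "(\<lambda>y. G y t) \<in> borel_measurable borel" for t
    using measurable_Pair1[OF Gm, of t] by (simp cong: measurable_cong_sets)
  have "(\<integral>\<^sup>+t. (\<integral>\<^sup>+y. G t y \<partial>lborel) * indicator {0..<T} t \<partial>lborel)
      = (\<integral>\<^sup>+t. (\<integral>\<^sup>+z. G t (t + z) * indicator {0..<T} t \<partial>lborel) \<partial>lborel)"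
  proof (intro nn_integral_cong)
    fix t
    have "(\<integral>\<^sup>+y. G t y \<partial>lborel) = (\<integral>\<^sup>+z. G t (z + t) \<partial>lborel)"
      by (rule nn_shift) (rule mG2)
    then show "(\<integral>\<^sup>+y. G t y \<partial>lborel) * indicator {0..<T} t = (\<integral>\<^sup>+z. G t (t + z) * indicator {0..<T} t \<partial>lborel)"
      by (simp add: nn_integral_multc add.commute)
  qed
  also have "\<dots> = (\<integral>\<^sup>+z. (\<integral>\<^sup>+t. G t (t + z) * indicator {0..<T} t \<partial>lborel) \<partial>lborel)"
  proof (rule lborel_pair.Fubini'[symmetric])
    show "(\<lambda>(t, z). G t (t + z) * indicator {0..<T} t) \<in> borel_measurable (lborel \<Otimes>\<^sub>M lborel)"
      using m1[of 0 1] by measurable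
  qed
  also have "\<dots> = (\<integral>\<^sup>+z. (\<integral>\<^sup>+t. G (t - z) t * indicator {0..<T} t \<partial>lborel) \<partial>lborel)"
  proof (rule nn_integral_cong)
    fix z
    have m3: "(\<lambda>t. G (t - z) t) \<in> borel_measurable borel"
      using measurable_Pair2[OF m1[of "-1" 0], of z] by (simp cong: measurable_cong_sets)
    have m4: "(\<lambda>t. G t (t + z)) \<in> borel_measurable borel"
      using measurable_Pair1[OF m1[of 0 1], of z] by (simp cong: measurable_cong_sets)
    have "(\<integral>\<^sup>+t. G t (t + z) * indicator {0..<T} t \<partial>lborel)
        = (\<integral>\<^sup>+t. G (t + - z) (t + - z + z) * indicator {0..<T} (t + - z) \<partial>lborel)"
      by (rule nn_shift) (use m4 in measurable)
    also have "\<dots> = (\<integral>\<^sup>+t. G (t - z) t * indicator {z..<z+T} t \<partial>lborel)"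
      by (intro nn_integral_cong) (auto simp: indicator_def)
    also have "\<dots> = (\<integral>\<^sup>+t. G (t - z) t * indicator {0..<T} t \<partial>lborel)"
      by (rule periodic_int[OF m3 T]) (metis per diff_add_eq)
    finally show "(\<integral>\<^sup>+t. G t (t + z) * indicator {0..<T} t \<partial>lborel) = (\<integral>\<^sup>+t. G (t - z) t * indicator {0..<T} t \<partial>lborel)" .
  qed
  also have "\<dots> = (\<integral>\<^sup>+z. (\<integral>\<^sup>+t. G (t + z) t * indicator {0..<T} t \<partial>lborel) \<partial>lborel)"
  proof (subst nn_reflect)
    show "(\<lambda>z. \<integral>\<^sup>+t. G (t - z) t * indicator {0..<T} t \<partial>lborel) \<in> borel_measurable borel"
      using m1[of "-1" 0] by measurable
    show "(\<integral>\<^sup>+z. (\<integral>\<^sup>+t. G (t - - z) t * indicator {0..<T} t \<partial>lborel) \<partial>lborel) = (\<integral>\<^sup>+z. (\<integral>\<^sup>+t. G (t + z) t * indicator {0..<T} t \<partial>lborel) \<partial>lborel)"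
      by simp
  qed
  also have "\<dots> = (\<integral>\<^sup>+t. (\<integral>\<^sup>+z. G (t + z) t * indicator {0..<T} t \<partial>lborel) \<partial>lborel)"
  proof (rule lborel_pair.Fubini')
    show "(\<lambda>(t, z). G (t + z) t * indicator {0..<T} t) \<in> borel_measurable (lborel \<Otimes>\<^sub>M lborel)"
      using m1[of 1 0] by measurable
  qed
  also have "\<dots> = (\<integral>\<^sup>+t. (\<integral>\<^sup>+y. G y t \<partial>lborel) * indicator {0..<T} t \<partial>lborel)"
  proof (intro nn_integral_cong)
    fix t
    have "(\<integral>\<^sup>+y. G y t \<partial>lborel) = (\<integral>\<^sup>+z. G (z + t) t \<partial>lborel)"
      by (rule nn_shift) (rule mG1)
    then show "(\<integral>\<^sup>+z. G (t + z) t * indicator {0..<T} t \<partial>lborel) = (\<integral>\<^sup>+y. G y t \<partial>lborel) * indicator {0..<T} t"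
      by (simp add: nn_integral_multc add.commute)
  qed
  finally show ?thesis .
qed



lemma u_conf_meas[measurable]: "u_conf T x \<in> borel_measurable borel"
  unfolding u_conf_def by measurable

definition Kf :: "real \<Rightarrow> real \<Rightarrow> nat \<Rightarrow> (nat \<Rightarrow> real) \<Rightarrow> real \<Rightarrow> real \<Rightarrow> ennreal" where
  "Kf s p T x t y = ennreal (\<bar>u_conf T x t - u_conf T x y\<bar> powr p / \<bar>t - y\<bar> powr (1 + s * p))"

definition FF :: "real \<Rightarrow> real \<Rightarrow> nat \<Rightarrow> (nat \<Rightarrow> real) \<Rightarrow> ennreal" where
  "FF s p T x = (\<integral>\<^sup>+t. (\<integral>\<^sup>+y. Kf s p T x t y \<partial>lborel) * indicator {0..<real T} t \<partial>lborel)"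

lemma F_energy_FF: "F_energy s p T x = enn2real (FF s p T x)"
  unfolding F_energy_def FF_def Kf_def by simp

lemma Kf_meas[measurable]: "case_prod (Kf s p T x) \<in> borel_measurable (lborel \<Otimes>\<^sub>M lborel)"
  unfolding Kf_def by measurable

lemma Kf_sym: "Kf s p T x t y = Kf s p T x y t"
  unfolding Kf_def by (simp add: abs_minus_commute)

lemma u_conf_periodic: "T > 0 \<Longrightarrow> u_conf T x (y + real T) = u_conf T x y"
proof -
  assume T: "T > 0"
  have "(\<Sum>j\<in>{1..T}. real_of_int \<lfloor>(y + real T - x j) / real T\<rfloor>) = (\<Sum>j\<in>{1..T}. real_of_int \<lfloor>(y - x j) / real T\<rfloor> + 1)"
  proof (intro sum.cong refl)
    fix j
    have "(y + real T - x j) / real T = (y - x j) / real T + 1" using T by (simp add: field_simps)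
    then show "real_of_int \<lfloor>(y + real T - x j) / real T\<rfloor> = real_of_int \<lfloor>(y - x j) / real T\<rfloor> + 1" by simp
  qed
  then show ?thesis unfolding u_conf_def by (simp add: sum.distrib)
qed

lemma Kf_periodic: "T > 0 \<Longrightarrow> Kf s p T x (t + real T) (y + real T) = Kf s p T x t y"
  unfolding Kf_def by (simp add: u_conf_periodic)

definition dl :: "nat \<Rightarrow> real \<Rightarrow> real \<Rightarrow> real \<Rightarrow> real" where
  "dl T a h y = real_of_int \<lfloor>(y - a) / real T\<rfloor> - real_of_int \<lfloor>(y - a - h) / real T\<rfloor>"

lemma dl_periodic: "T > 0 \<Longrightarrow> dl T a h (y + real T) = dl T a h y"
proof -
  assume T: "T > 0"
  have 1: "(y + real T - a) / real T = (y - a) / real T + 1" using T by (simp add: field_simps)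
  have 2: "(y + real T - a - h) / real T = (y - a - h) / real T + 1" using T by (simp add: field_simps)
  show ?thesis unfolding dl_def 1 2 by simp
qed

lemma u_conf_rigid:
  assumes "i \<in> {1..T}"
  shows "u_conf T (rigid_var x i h) y = u_conf T x y + dl T (x i) h y"
proof -
  let ?f = "\<lambda>j. real_of_int \<lfloor>(y - x j) / real T\<rfloor>"
  let ?g = "\<lambda>j. real_of_int \<lfloor>(y - rigid_var x i h j) / real T\<rfloor>"
  have "(\<Sum>j\<in>{1..T}. ?g j) = ?g i + (\<Sum>j\<in>{1..T}-{i}. ?g j)"
    using assms by (simp add: sum.remove)
  also have "(\<Sum>j\<in>{1..T}-{i}. ?g j) = (\<Sum>j\<in>{1..T}-{i}. ?f j)"
    by (intro sum.cong) (auto simp: rigid_var_def)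
  also have "(\<Sum>j\<in>{1..T}. ?f j) = ?f i + (\<Sum>j\<in>{1..T}-{i}. ?f j)"
    using assms by (simp add: sum.remove)
  ultimately show ?thesis
    unfolding u_conf_def dl_def by (simp add: rigid_var_def algebra_simps)
qed



lemma decomp:
  fixes K :: "real \<Rightarrow> real \<Rightarrow> ennreal" and D :: "real \<Rightarrow> real" and T :: real
  assumes Km[measurable]: "case_prod K \<in> borel_measurable (lborel \<Otimes>\<^sub>M lborel)" and T: "T > 0"
    and Ksym: "\<And>t y. K t y = K y t" and Kper: "\<And>t y. K (t + T) (y + T) = K t y"
    and Dm[measurable]: "D \<in> borel_measurable borel" and Dper: "\<And>t. D (t + T) = D t"
    and D01: "\<And>t y. D t \<noteq> D y \<Longrightarrow> (D t \<noteq> 0 \<and> D y = 0) \<or> (D t = 0 \<and> D y \<noteq> 0)"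
  shows "(\<integral>\<^sup>+t. (\<integral>\<^sup>+y. K t y \<partial>lborel) * indicator {0..<T} t \<partial>lborel)
       = (\<integral>\<^sup>+t. (\<integral>\<^sup>+y. K t y * of_bool (D t = D y) \<partial>lborel) * indicator {0..<T} t \<partial>lborel)
         + 2 * (\<integral>\<^sup>+t. (\<integral>\<^sup>+y. K t y * of_bool (D t \<noteq> 0 \<and> D y = 0) \<partial>lborel) * indicator {c..<c+T} t \<partial>lborel)"
proof -
  let ?E = "\<lambda>t y. K t y * of_bool (D t = D y)"
  let ?P = "\<lambda>t y. K t y * of_bool (D t \<noteq> 0 \<and> D y = 0)"
  let ?Q = "\<lambda>t y. K t y * of_bool (D t = 0 \<and> D y \<noteq> 0)"
  have mE[measurable]: "case_prod ?E \<in> borel_measurable (lborel \<Otimes>\<^sub>M lborel)" by measurable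
  have mP[measurable]: "case_prod ?P \<in> borel_measurable (lborel \<Otimes>\<^sub>M lborel)" by measurable
  have mQ[measurable]: "case_prod ?Q \<in> borel_measurable (lborel \<Otimes>\<^sub>M lborel)" by measurable
  have split: "K t y = ?E t y + ?P t y + ?Q t y" for t y
    using D01[of t y] by (cases "D t = D y") auto
  have "(\<integral>\<^sup>+t. (\<integral>\<^sup>+y. K t y \<partial>lborel) * indicator {0..<T} t \<partial>lborel)
     = (\<integral>\<^sup>+t. (\<integral>\<^sup>+y. ?E t y \<partial>lborel) * indicator {0..<T} t + (\<integral>\<^sup>+y. ?P t y \<partial>lborel) * indicator {0..<T} t
            + (\<integral>\<^sup>+y. ?Q t y \<partial>lborel) * indicator {0..<T} t \<partial>lborel)"
  proof (rule nn_integral_cong)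
    fix t
    have "(\<integral>\<^sup>+y. K t y \<partial>lborel) = (\<integral>\<^sup>+y. ?E t y + ?P t y + ?Q t y \<partial>lborel)"
      by (simp only: split[symmetric])
    also have "\<dots> = (\<integral>\<^sup>+y. ?E t y \<partial>lborel) + (\<integral>\<^sup>+y. ?P t y \<partial>lborel) + (\<integral>\<^sup>+y. ?Q t y \<partial>lborel)"
      by (simp add: nn_integral_add)
    finally show "(\<integral>\<^sup>+y. K t y \<partial>lborel) * indicator {0..<T} t = (\<integral>\<^sup>+y. ?E t y \<partial>lborel) * indicator {0..<T} t + (\<integral>\<^sup>+y. ?P t y \<partial>lborel) * indicator {0..<T} t
            + (\<integral>\<^sup>+y. ?Q t y \<partial>lborel) * indicator {0..<T} t"
      by (simp add: distrib_right)
  qed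
  also have "\<dots> = (\<integral>\<^sup>+t. (\<integral>\<^sup>+y. ?E t y \<partial>lborel) * indicator {0..<T} t \<partial>lborel)
     + (\<integral>\<^sup>+t. (\<integral>\<^sup>+y. ?P t y \<partial>lborel) * indicator {0..<T} t \<partial>lborel)
     + (\<integral>\<^sup>+t. (\<integral>\<^sup>+y. ?Q t y \<partial>lborel) * indicator {0..<T} t \<partial>lborel)"
    by (simp add: nn_integral_add)
  also have "(\<integral>\<^sup>+t. (\<integral>\<^sup>+y. ?Q t y \<partial>lborel) * indicator {0..<T} t \<partial>lborel)
     = (\<integral>\<^sup>+t. (\<integral>\<^sup>+y. ?Q y t \<partial>lborel) * indicator {0..<T} t \<partial>lborel)"
    by (rule swap_sym[OF mQ T]) (simp add: Kper Dper)
  also have "(\<lambda>t. (\<integral>\<^sup>+y. ?Q y t \<partial>lborel)) = (\<lambda>t. (\<integral>\<^sup>+y. ?P t y \<partial>lborel))"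
    by (intro ext nn_integral_cong) (simp add: Ksym)
  also have "(\<integral>\<^sup>+t. (\<integral>\<^sup>+y. ?P t y \<partial>lborel) * indicator {0..<T} t \<partial>lborel)
      = (\<integral>\<^sup>+t. (\<integral>\<^sup>+y. ?P t y \<partial>lborel) * indicator {c..<c+T} t \<partial>lborel)"
  proof (rule periodic_int[symmetric, OF _ T])
    show "(\<lambda>t. \<integral>\<^sup>+y. ?P t y \<partial>lborel) \<in> borel_measurable borel" by measurable
    fix t
    have "(\<integral>\<^sup>+y. ?P (t + T) y \<partial>lborel) = (\<integral>\<^sup>+y. ?P (t + T) (y + T) \<partial>lborel)"
      by (rule nn_shift) measurable
    then show "(\<integral>\<^sup>+y. ?P (t + T) y \<partial>lborel) = (\<integral>\<^sup>+y. ?P t y \<partial>lborel)"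
      by (simp add: Kper Dper)
  qed
  finally show ?thesis by (simp add: add.assoc mult_2)
qed



lemma floor_jump:
  fixes T :: real
  assumes T: "T > 0" and ne: "\<lfloor>(t - z) / T\<rfloor> \<noteq> \<lfloor>(y - z) / T\<rfloor>"
  shows "\<exists>k::int. min t y < z + real_of_int k * T \<and> z + real_of_int k * T \<le> max t y"
proof -
  define k where "k = \<lfloor>(max t y - z) / T\<rfloor>"
  have k1: "real_of_int k \<le> (max t y - z) / T" unfolding k_def by linarith
  have "\<lfloor>(min t y - z) / T\<rfloor> \<le> k" unfolding k_def
    by (intro floor_mono divide_right_mono) (use T in auto)
  moreover have "\<lfloor>(min t y - z) / T\<rfloor> \<noteq> k" using ne unfolding k_def
    by (cases "t \<le> y") (auto simp: min_def max_def)
  ultimately have "\<lfloor>(min t y - z) / T\<rfloor> < k" by simp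
  then have "(min t y - z) / T < real_of_int k" by (simp add: floor_less_iff)
  then have "min t y < z + real_of_int k * T" using T by (simp add: field_simps)
  moreover have "z + real_of_int k * T \<le> max t y" using k1 T by (simp add: field_simps)
  ultimately show ?thesis by blast
qed

definition psi :: "real \<Rightarrow> real \<Rightarrow> real \<Rightarrow> ennreal" where
  "psi e b z = (if z = b then top else ennreal (\<bar>z - b\<bar> powr e))"

lemma psi_meas[measurable]: "psi e b \<in> borel_measurable borel"
  unfolding psi_def by measurable

lemma psi_int:
  assumes "e > -1"
  shows "(\<integral>\<^sup>+y. psi e b y * indicator {c..d} y \<partial>lborel) < \<infinity>"
proof -
  have "(\<integral>\<^sup>+y. psi e b y * indicator {c..d} y \<partial>lborel) = (\<integral>\<^sup>+y. ennreal (\<bar>y - b\<bar> powr e) * indicator {c..d} y \<partial>lborel)"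
    by (intro nn_integral_cong_AE, rule eventually_mono[OF AE_lborel_singleton[of b]]) (simp add: psi_def)
  then show ?thesis using powr_int_local[OF assms] by simp
qed



lemma u_conf_diff: "T > 0 \<Longrightarrow> \<bar>u_conf T x t - u_conf T x y\<bar> < real T"
proof -
  assume T: "T > 0"
  have b: "(\<Sum>j\<in>{1..T}. x j) / real T \<le> u_conf T x z \<and> u_conf T x z < (\<Sum>j\<in>{1..T}. x j) / real T + real T" for z
  proof -
    have s1: "(\<Sum>j\<in>{1..T}. real_of_int \<lfloor>(z - x j) / real T\<rfloor>) \<le> (\<Sum>j\<in>{1..T}. (z - x j) / real T)"
      by (intro sum_mono) simp
    have s2: "(\<Sum>j\<in>{1..T}. (z - x j) / real T - 1) < (\<Sum>j\<in>{1..T}. real_of_int \<lfloor>(z - x j) / real T\<rfloor>)"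
      using T by (intro sum_strict_mono) (auto simp: real_of_int_floor_gt_diff_one)
    have e1: "(\<Sum>j\<in>{1..T}. (z - x j) / real T) = z - (\<Sum>j\<in>{1..T}. x j) / real T"
      using T by (simp add: sum_divide_distrib[symmetric] sum_subtractf diff_divide_distrib)
    have e2: "(\<Sum>j\<in>{1..T}. (z - x j) / real T - 1) = z - (\<Sum>j\<in>{1..T}. x j) / real T - real T"
      using e1 by (simp add: sum_subtractf)
    show ?thesis using s1 s2 e1 e2 unfolding u_conf_def by linarith
  qed
  show ?thesis using b[of t] b[of y] by linarith
qed

lemma Kf_le_far:
  assumes "T > 0" "p > 0"
  shows "Kf s p T x t y \<le> ennreal (real T powr p * \<bar>t - y\<bar> powr (- (1 + s * p)))"
proof -
  have "\<bar>u_conf T x t - u_conf T x y\<bar> powr p \<le> real T powr p"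
    using u_conf_diff[OF assms(1), of x t y] assms(2) by (intro powr_mono2) auto
  then have "\<bar>u_conf T x t - u_conf T x y\<bar> powr p / \<bar>t - y\<bar> powr (1 + s * p) \<le> real T powr p / \<bar>t - y\<bar> powr (1 + s * p)"
    by (intro divide_right_mono) auto
  then show ?thesis unfolding Kf_def by (intro ennreal_leI) (simp only: powr_minus_divide, simp)
qed

lemma Kf_pointwise:
  assumes T: "T > 0" and s: "s > 0" and p: "p > 0" and x: "\<forall>j\<in>{1..T}. 0 \<le> x j \<and> x j < real T"
    and t: "t \<in> {0..<real T}"
  shows "Kf s p T x t y \<le> ennreal (\<bar>t - y\<bar> powr (p - (1 + s * p))) * indicator {-1..1} (y - t)
      + ennreal (real T powr p * \<bar>t - y\<bar> powr (- (1 + s * p))) * indicator {z. 1 \<le> \<bar>z\<bar>} (y - t)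
      + (\<Sum>j\<in>{1..T}. \<Sum>k\<in>{-1,0,1::int}. ennreal (real T powr p) * psi (- (1 + s * p) / 2) (x j + real_of_int k * real T) t
            * psi (- (1 + s * p) / 2) (x j + real_of_int k * real T) y * indicator {-1..real T + 1} y)"
    (is "_ \<le> ?A + ?B + ?C")
proof -
  define q where "q = 1 + s * p"
  have q: "q > 0" using s p unfolding q_def by (simp add: add_pos_nonneg)
  consider "t = y" | "\<bar>t - y\<bar> \<ge> 1" | "t \<noteq> y" "\<bar>t - y\<bar> < 1" by linarith
  then show ?thesis
  proof cases
    case 1
    then show ?thesis by (simp add: Kf_def)
  next
    case 2
    then have "Kf s p T x t y \<le> ?B" using Kf_le_far[OF T p, of s x t y] by (simp add: indicator_def abs_minus_commute)
    then show ?thesis by (intro add_increasing2 add_increasing) auto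
  next
    case 3
    show ?thesis
    proof (cases "\<forall>j\<in>{1..T}. \<lfloor>(t - x j) / real T\<rfloor> = \<lfloor>(y - x j) / real T\<rfloor>")
      case True
      then have "u_conf T x t - u_conf T x y = t - y" unfolding u_conf_def by simp
      then have "Kf s p T x t y = ennreal (\<bar>t - y\<bar> powr (p - (1 + s * p)))"
        unfolding Kf_def using 3 by (simp add: powr_diff)
      also have "\<dots> = ?A" using 3 by (auto simp: indicator_def abs_minus_commute abs_less_iff)
      finally have "Kf s p T x t y \<le> ?A" by simp
      then show ?thesis by (intro add_increasing2) auto
    next
      case False
      then obtain j where j: "j \<in> {1..T}" and ne: "\<lfloor>(t - x j) / real T\<rfloor> \<noteq> \<lfloor>(y - x j) / real T\<rfloor>" by blast
      obtain k :: int where k: "min t y < x j + real_of_int k * real T" "x j + real_of_int k * real T \<le> max t y"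
        using floor_jump[of "real T" t "x j" y] ne T by auto
      define b where "b = x j + real_of_int k * real T"
      have xj: "0 \<le> x j" "x j < real T" using x j by auto
      have T1: "real T \<ge> 1" using T by simp
      have bint: "-1 < b" "b < real T + 1" using k t 3 unfolding b_def by (auto simp: min_def max_def split: if_splits)
      have kin: "k \<in> {-1,0,1}"
      proof -
        have "k \<le> 1"
        proof (rule ccontr)
          assume "\<not> k \<le> 1"
          then have "real_of_int k \<ge> 2" by simp
          then have "real_of_int k * real T \<ge> 2 * real T" using T by (intro mult_right_mono) auto
          then show False using bint xj T1 unfolding b_def by linarith
        qed
        moreover have "k \<ge> -1"
        proof (rule ccontr)
          assume "\<not> k \<ge> -1"
          then have "real_of_int k \<le> -2" by simp
          then have "real_of_int k * real T \<le> -2 * real T" using T by (intro mult_right_mono) auto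
          then show False using bint xj T1 unfolding b_def by linarith
        qed
        ultimately show ?thesis by auto
      qed
      have yin: "y \<in> {-1..real T + 1}" using t 3 by auto
      have tm: "Kf s p T x t y \<le> ennreal (real T powr p) * psi (- q / 2) b t * psi (- q / 2) b y * indicator {-1..real T + 1} y"
      proof (cases "t = b \<or> y = b")
        case True
        have pos1: "psi (- q / 2) b t \<noteq> 0" "psi (- q / 2) b y \<noteq> 0"
          unfolding psi_def by auto
        have "ennreal (real T powr p) \<noteq> 0" using T by simp
        then have "ennreal (real T powr p) * psi (- q / 2) b t * psi (- q / 2) b y = top"
          using True pos1 by (auto simp: psi_def ennreal_mult_top ennreal_top_mult)
        then show ?thesis using yin by simp
      next
        case False
        have d1: "0 < \<bar>t - b\<bar>" "\<bar>t - b\<bar> \<le> \<bar>t - y\<bar>" "0 < \<bar>y - b\<bar>" "\<bar>y - b\<bar> \<le> \<bar>t - y\<bar>"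
          using False k unfolding b_def[symmetric] by (auto simp: min_def max_def split: if_splits)
        have "\<bar>t - b\<bar> powr (q/2) * \<bar>y - b\<bar> powr (q/2) \<le> \<bar>t - y\<bar> powr (q/2) * \<bar>t - y\<bar> powr (q/2)"
          using d1 q by (intro mult_mono powr_mono2) auto
        also have "\<dots> = \<bar>t - y\<bar> powr q" by (simp flip: powr_add)
        finally have i1: "\<bar>t - b\<bar> powr (q/2) * \<bar>y - b\<bar> powr (q/2) \<le> \<bar>t - y\<bar> powr q" .
        have dpos: "0 < \<bar>t - b\<bar> powr (q/2) * \<bar>y - b\<bar> powr (q/2)" using d1 by simp
        have "\<bar>u_conf T x t - u_conf T x y\<bar> powr p \<le> real T powr p"
          using u_conf_diff[OF T, of x t y] p by (intro powr_mono2) auto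
        then have "\<bar>u_conf T x t - u_conf T x y\<bar> powr p / \<bar>t - y\<bar> powr q
            \<le> real T powr p / (\<bar>t - b\<bar> powr (q/2) * \<bar>y - b\<bar> powr (q/2))"
          using i1 dpos by (intro frac_le) auto
        also have "\<dots> = real T powr p * \<bar>t - b\<bar> powr (- q / 2) * \<bar>y - b\<bar> powr (- q / 2)"
          by (simp add: powr_minus_divide)
        finally have "Kf s p T x t y \<le> ennreal (real T powr p * \<bar>t - b\<bar> powr (- q / 2) * \<bar>y - b\<bar> powr (- q / 2))"
          unfolding Kf_def q_def by (intro ennreal_leI)
        also have "\<dots> = ennreal (real T powr p) * psi (- q / 2) b t * psi (- q / 2) b y * indicator {-1..real T + 1} y"
          using False yin by (simp add: psi_def ennreal_mult)
        finally show ?thesis .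
      qed
      have "ennreal (real T powr p) * psi (- q / 2) b t * psi (- q / 2) b y * indicator {-1..real T + 1} y
          \<le> (\<Sum>k\<in>{-1,0,1::int}. ennreal (real T powr p) * psi (- q / 2) (x j + real_of_int k * real T) t
            * psi (- q / 2) (x j + real_of_int k * real T) y * indicator {-1..real T + 1} y)"
        unfolding b_def by (rule member_le_sum[OF kin]) auto
      also have "\<dots> \<le> ?C" unfolding q_def
        by (rule member_le_sum[OF j, where f = "\<lambda>j. \<Sum>k\<in>{-1,0,1::int}. ennreal (real T powr p) * psi (- (1 + s * p) / 2) (x j + real_of_int k * real T) t
            * psi (- (1 + s * p) / 2) (x j + real_of_int k * real T) y * indicator {-1..real T + 1} y"]) auto
      finally have "Kf s p T x t y \<le> ?C" using tm by simp
      then show ?thesis by (intro add_increasing) auto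
    qed
  qed
qed



lemma FF_finite:
  assumes T: "T > 0" and s: "0 < s" "s < 1" and p: "p > 0" and sp: "s * p < 1"
    and x: "\<forall>j\<in>{1..T}. 0 \<le> x j \<and> x j < real T"
  shows "FF s p T x < \<infinity>"
proof -
  define q where "q = 1 + s * p"
  define e where "e = - q / 2"
  define bb where "bb = (\<lambda>j (k::int). x j + real_of_int k * real T)"
  define C1 where "C1 = (\<integral>\<^sup>+z. ennreal (\<bar>z\<bar> powr (p - q)) * indicator {-1..1} z \<partial>lborel)"
  define C2 where "C2 = (\<integral>\<^sup>+z. ennreal (\<bar>z\<bar> powr (- q)) * indicator {z. 1 \<le> \<bar>z\<bar>} z \<partial>lborel)"
  define D where "D = (\<lambda>j k. (\<integral>\<^sup>+y. psi e (bb j k) y * indicator {-1..real T + 1} y \<partial>lborel))"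
  define Phi where "Phi = (\<lambda>t. C1 + ennreal (real T powr p) * C2 + (\<Sum>j\<in>{1..T}. \<Sum>k\<in>{-1,0,1::int}. ennreal (real T powr p) * D j k * psi e (bb j k) t))"
  have pq: "p - q > -1" using s p unfolding q_def
    by (simp add: algebra_simps)
  have qq: "- q < -1" using s p unfolding q_def by simp
  have ee: "e > -1" using sp unfolding e_def q_def by simp
  have C1f: "C1 < \<infinity>" unfolding C1_def using powr_int_sym[OF pq, of 1] by simp
  have C2f: "C2 < \<infinity>" unfolding C2_def using powr_int_inf[OF qq, of 1] by simp
  have Df: "D j k < \<infinity>" for j k unfolding D_def by (rule psi_int[OF ee])
  have inner: "(\<integral>\<^sup>+y. Kf s p T x t y \<partial>lborel) \<le> Phi t" if t: "t \<in> {0..<real T}" for t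
  proof -
    have "(\<integral>\<^sup>+y. Kf s p T x t y \<partial>lborel) \<le> (\<integral>\<^sup>+y. ennreal (\<bar>t - y\<bar> powr (p - q)) * indicator {-1..1} (y - t)
      + ennreal (real T powr p * \<bar>t - y\<bar> powr (- q)) * indicator {z. 1 \<le> \<bar>z\<bar>} (y - t)
      + (\<Sum>j\<in>{1..T}. \<Sum>k\<in>{-1,0,1::int}. ennreal (real T powr p) * psi e (bb j k) t
            * psi e (bb j k) y * indicator {-1..real T + 1} y) \<partial>lborel)"
      by (intro nn_integral_mono) (use Kf_pointwise[OF T s(1) p x t] in \<open>simp add: q_def e_def bb_def\<close>)
    also have "\<dots> = (\<integral>\<^sup>+y. ennreal (\<bar>t - y\<bar> powr (p - q)) * indicator {-1..1} (y - t) \<partial>lborel)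
      + (\<integral>\<^sup>+y. ennreal (real T powr p * \<bar>t - y\<bar> powr (- q)) * indicator {z. 1 \<le> \<bar>z\<bar>} (y - t) \<partial>lborel)
      + (\<integral>\<^sup>+y. (\<Sum>j\<in>{1..T}. \<Sum>k\<in>{-1,0,1::int}. ennreal (real T powr p) * psi e (bb j k) t
            * psi e (bb j k) y * indicator {-1..real T + 1} y) \<partial>lborel)"
    proof -
      have mA: "(\<lambda>y. ennreal (\<bar>t - y\<bar> powr (p - q)) * indicator {-1..1} (y - t)) \<in> borel_measurable lborel" by measurable
      have mB: "(\<lambda>y. ennreal (real T powr p * \<bar>t - y\<bar> powr (- q)) * indicator {z. 1 \<le> \<bar>z\<bar>} (y - t)) \<in> borel_measurable lborel" by measurable
      have mC: "(\<lambda>y. (\<Sum>j\<in>{1..T}. \<Sum>k\<in>{-1,0,1::int}. ennreal (real T powr p) * psi e (bb j k) t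
            * psi e (bb j k) y * indicator {-1..real T + 1} y)) \<in> borel_measurable lborel" by measurable
      show ?thesis by (simp only: nn_integral_add[OF borel_measurable_add[OF mA mB] mC] nn_integral_add[OF mA mB])
    qed
    also have "(\<integral>\<^sup>+y. ennreal (\<bar>t - y\<bar> powr (p - q)) * indicator {-1..1} (y - t) \<partial>lborel) = C1"
    proof -
      have "(\<integral>\<^sup>+y. ennreal (\<bar>t - y\<bar> powr (p - q)) * indicator {-1..1} (y - t) \<partial>lborel)
          = (\<integral>\<^sup>+y. ennreal (\<bar>t - (y + t)\<bar> powr (p - q)) * indicator {-1..1} (y + t - t) \<partial>lborel)"
        by (rule nn_shift) measurable
      also have "\<dots> = C1" unfolding C1_def by (intro nn_integral_cong) simp
      finally show ?thesis .
    qed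
    also have "(\<integral>\<^sup>+y. ennreal (real T powr p * \<bar>t - y\<bar> powr (- q)) * indicator {z. 1 \<le> \<bar>z\<bar>} (y - t) \<partial>lborel)
        = ennreal (real T powr p) * C2"
    proof -
      have "(\<integral>\<^sup>+y. ennreal (real T powr p * \<bar>t - y\<bar> powr (- q)) * indicator {z. 1 \<le> \<bar>z\<bar>} (y - t) \<partial>lborel)
          = (\<integral>\<^sup>+y. ennreal (real T powr p * \<bar>t - (y + t)\<bar> powr (- q)) * indicator {z. 1 \<le> \<bar>z\<bar>} (y + t - t) \<partial>lborel)"
        by (rule nn_shift) measurable
      also have "\<dots> = (\<integral>\<^sup>+y. ennreal (real T powr p) * (ennreal (\<bar>y\<bar> powr (- q)) * indicator {z. 1 \<le> \<bar>z\<bar>} y) \<partial>lborel)"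
        by (intro nn_integral_cong) (simp add: ennreal_mult mult.assoc)
      also have "\<dots> = ennreal (real T powr p) * C2" unfolding C2_def
        by (rule nn_integral_cmult) measurable
      finally show ?thesis .
    qed
    also have "(\<integral>\<^sup>+y. (\<Sum>j\<in>{1..T}. \<Sum>k\<in>{-1,0,1::int}. ennreal (real T powr p) * psi e (bb j k) t
            * psi e (bb j k) y * indicator {-1..real T + 1} y) \<partial>lborel)
        = (\<Sum>j\<in>{1..T}. \<Sum>k\<in>{-1,0,1::int}. ennreal (real T powr p) * D j k * psi e (bb j k) t)"
    proof -
      have "(\<integral>\<^sup>+y. (\<Sum>j\<in>{1..T}. \<Sum>k\<in>{-1,0,1::int}. ennreal (real T powr p) * psi e (bb j k) t
            * psi e (bb j k) y * indicator {-1..real T + 1} y) \<partial>lborel)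
          = (\<Sum>j\<in>{1..T}. \<Sum>k\<in>{-1,0,1::int}. (\<integral>\<^sup>+y. ennreal (real T powr p) * psi e (bb j k) t
            * psi e (bb j k) y * indicator {-1..real T + 1} y \<partial>lborel))"
        apply (subst nn_integral_sum, measurable)
        apply (rule sum.cong[OF refl])
        apply (subst nn_integral_sum, measurable)
        done
      also have "\<dots> = (\<Sum>j\<in>{1..T}. \<Sum>k\<in>{-1,0,1::int}. ennreal (real T powr p) * D j k * psi e (bb j k) t)"
      proof (intro sum.cong refl)
        fix j k
        have "(\<integral>\<^sup>+y. ennreal (real T powr p) * psi e (bb j k) t * psi e (bb j k) y * indicator {-1..real T + 1} y \<partial>lborel)
          = (\<integral>\<^sup>+y. (ennreal (real T powr p) * psi e (bb j k) t) * (psi e (bb j k) y * indicator {-1..real T + 1} y) \<partial>lborel)"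
          by (simp add: mult.assoc)
        also have "\<dots> = (ennreal (real T powr p) * psi e (bb j k) t) * D j k" unfolding D_def
          by (rule nn_integral_cmult) measurable
        finally show "(\<integral>\<^sup>+y. ennreal (real T powr p) * psi e (bb j k) t * psi e (bb j k) y * indicator {-1..real T + 1} y \<partial>lborel)
           = ennreal (real T powr p) * D j k * psi e (bb j k) t" by (simp add: mult_ac)
      qed
      finally show ?thesis .
    qed
    finally show ?thesis unfolding Phi_def by simp
  qed
  have "FF s p T x \<le> (\<integral>\<^sup>+t. Phi t * indicator {0..<real T} t \<partial>lborel)"
    unfolding FF_def by (intro nn_integral_mono) (auto simp: indicator_def inner)
  also have "\<dots> = (\<integral>\<^sup>+t. (C1 + ennreal (real T powr p) * C2) * indicator {0..<real T} t \<partial>lborel)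
     + (\<Sum>j\<in>{1..T}. \<Sum>k\<in>{-1,0,1::int}. ennreal (real T powr p) * D j k * (\<integral>\<^sup>+t. psi e (bb j k) t * indicator {0..<real T} t \<partial>lborel))"
  proof -
    have mP: "(\<lambda>t. (\<Sum>j\<in>{1..T}. \<Sum>k\<in>{-1,0,1::int}. ennreal (real T powr p) * D j k * psi e (bb j k) t) * indicator {0..<real T} t) \<in> borel_measurable lborel"
      by measurable
    have mc: "(\<lambda>t. (C1 + ennreal (real T powr p) * C2) * indicator {0..<real T} t) \<in> borel_measurable lborel"
      by measurable
    have "(\<integral>\<^sup>+t. Phi t * indicator {0..<real T} t \<partial>lborel) = (\<integral>\<^sup>+t. (C1 + ennreal (real T powr p) * C2) * indicator {0..<real T} t
        + (\<Sum>j\<in>{1..T}. \<Sum>k\<in>{-1,0,1::int}. ennreal (real T powr p) * D j k * psi e (bb j k) t) * indicator {0..<real T} t \<partial>lborel)"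
      unfolding Phi_def by (simp only: distrib_right)
    also have "\<dots> = (\<integral>\<^sup>+t. (C1 + ennreal (real T powr p) * C2) * indicator {0..<real T} t \<partial>lborel)
        + (\<integral>\<^sup>+t. (\<Sum>j\<in>{1..T}. \<Sum>k\<in>{-1,0,1::int}. ennreal (real T powr p) * D j k * psi e (bb j k) t) * indicator {0..<real T} t \<partial>lborel)"
      by (rule nn_integral_add[OF mc mP])
    also have sumeq: "(\<integral>\<^sup>+t. (\<Sum>j\<in>{1..T}. \<Sum>k\<in>{-1,0,1::int}. ennreal (real T powr p) * D j k * psi e (bb j k) t) * indicator {0..<real T} t \<partial>lborel)
       = (\<Sum>j\<in>{1..T}. \<Sum>k\<in>{-1,0,1::int}. ennreal (real T powr p) * D j k * (\<integral>\<^sup>+t. psi e (bb j k) t * indicator {0..<real T} t \<partial>lborel))"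
    proof -
    have "(\<integral>\<^sup>+t. (\<Sum>j\<in>{1..T}. \<Sum>k\<in>{-1,0,1::int}. ennreal (real T powr p) * D j k * psi e (bb j k) t) * indicator {0..<real T} t \<partial>lborel)
       = (\<integral>\<^sup>+t. (\<Sum>j\<in>{1..T}. \<Sum>k\<in>{-1,0,1::int}. ennreal (real T powr p) * D j k * (psi e (bb j k) t * indicator {0..<real T} t)) \<partial>lborel)"
      by (simp only: sum_distrib_right mult.assoc)
    also have "\<dots> = (\<Sum>j\<in>{1..T}. \<Sum>k\<in>{-1,0,1::int}. (\<integral>\<^sup>+t. ennreal (real T powr p) * D j k * (psi e (bb j k) t * indicator {0..<real T} t) \<partial>lborel))"
        apply (subst nn_integral_sum, measurable)
        apply (rule sum.cong[OF refl])
        apply (subst nn_integral_sum, measurable)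
        done
    also have "\<dots> = (\<Sum>j\<in>{1..T}. \<Sum>k\<in>{-1,0,1::int}. ennreal (real T powr p) * D j k * (\<integral>\<^sup>+t. psi e (bb j k) t * indicator {0..<real T} t \<partial>lborel))"
      by (intro sum.cong refl nn_integral_cmult) measurable
    finally show ?thesis .
    qed
    finally show ?thesis .
  qed
  also have "\<dots> < \<infinity>"
  proof -
    have a: "(\<integral>\<^sup>+t. (C1 + ennreal (real T powr p) * C2) * indicator {0..<real T} t \<partial>lborel) < \<infinity>"
      using C1f C2f by (simp add: nn_integral_cmult_indicator ennreal_mult_less_top)
    have b: "(\<integral>\<^sup>+t. psi e (bb j k) t * indicator {0..<real T} t \<partial>lborel) < \<infinity>" for j k
    proof -
      have "(\<integral>\<^sup>+t. psi e (bb j k) t * indicator {0..<real T} t \<partial>lborel) \<le> (\<integral>\<^sup>+t. psi e (bb j k) t * indicator {0..real T} t \<partial>lborel)"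
        by (intro nn_integral_mono) (auto simp: indicator_def)
      then show ?thesis using psi_int[OF ee, of "bb j k" 0 "real T"] by (simp add: order_le_less_trans)
    qed
    show ?thesis using a b Df by (simp add: ennreal_mult_less_top)
  qed
  finally show ?thesis .
qed



lemma assemble:
  fixes E P P' N R J :: ennreal
  assumes F: "G0 = E + 2 * P" and F': "G1 = E + 2 * P'" and fin: "G0 < \<infinity>"
    and b1: "P' \<le> N + R + ennreal z" and b2: "N + ennreal (1 + \<eta>) * J \<le> P" and b3: "R \<le> J"
    and b4: "ennreal jl \<le> J" and eta: "\<eta> > 0" and z: "z \<ge> 0"
  shows "enn2real G1 - enn2real G0 \<le> 2 * z - 2 * \<eta> * jl"
proof -
  have "E < \<infinity>" "P < \<infinity>" using fin unfolding F by (auto simp: ennreal_mult_less_top)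
  then obtain e pp where e: "E = ennreal e" "e \<ge> 0" and pp: "P = ennreal pp" "pp \<ge> 0"
    by (auto simp: less_top_ennreal)
  have "N < \<infinity>" "ennreal (1 + \<eta>) * J < \<infinity>" using b2 \<open>P < \<infinity>\<close>
    by (auto simp: order_le_less_trans[OF _ \<open>P < \<infinity>\<close>] dest: order_le_less_trans[of _ P])
  then have "J < \<infinity>" using eta by (auto simp: ennreal_mult_less_top)
  then have "R < \<infinity>" using b3 by (simp add: order_le_less_trans)
  obtain n where n: "N = ennreal n" "n \<ge> 0" using \<open>N < \<infinity>\<close> by (auto simp: less_top_ennreal)
  obtain j where j: "J = ennreal j" "j \<ge> 0" using \<open>J < \<infinity>\<close> by (auto simp: less_top_ennreal)
  obtain r where r: "R = ennreal r" "r \<ge> 0" using \<open>R < \<infinity>\<close> by (auto simp: less_top_ennreal)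
  have "P' < \<infinity>" using b1 n r by (simp add: order_le_less_trans)
  then obtain pp' where pp': "P' = ennreal pp'" "pp' \<ge> 0" by (auto simp: less_top_ennreal)
  have i1: "pp' \<le> n + r + z" using b1 n r pp' z by (simp add: ennreal_plus[symmetric] del: ennreal_plus)
  have i2: "n + (1 + \<eta>) * j \<le> pp" using b2 n j pp eta
    by (simp add: ennreal_mult[symmetric] ennreal_plus[symmetric] del: ennreal_plus)
  have i3: "r \<le> j" using b3 r j by simp
  have i4: "jl \<le> j" using b4 j by (auto simp: ennreal_le_iff2)
  have two: "ennreal (2 * v) = 2 * ennreal v" if "v \<ge> 0" for v using that by (simp add: ennreal_mult)
  have "G1 = ennreal (e + 2 * pp')" using F' e pp' by (simp add: two)
  moreover have "G0 = ennreal (e + 2 * pp)" using F e pp by (simp add: two)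
  ultimately have "enn2real G1 - enn2real G0 = 2 * pp' - 2 * pp" using e pp pp' by (simp del: ennreal_plus)
  also have "\<dots> \<le> 2 * z - 2 * \<eta> * jl"
  proof -
    have "\<eta> * jl \<le> \<eta> * j" using i4 eta by simp
    then show ?thesis using i1 i2 i3 by (simp add: algebra_simps)
  qed
  finally show ?thesis .
qed



lemma superadd: fixes m p :: real assumes m: "m \<ge> 2" and p: "p > 1"
  shows "(m - 1) powr p + 1 < m powr p"
proof -
  have a: "(m - 1) powr (p - 1) < m powr (p - 1)" using m p by (intro powr_less_mono2) auto
  have b: "1 < m powr (p - 1)" using powr_less_mono2[of "p - 1" 1 m] m p by simp
  have "(m - 1) powr p = (m - 1) * (m - 1) powr (p - 1)"
    using m by (simp add: powr_mult_base)
  also have "\<dots> < (m - 1) * m powr (p - 1)" using a m by simp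
  finally have "(m - 1) powr p + 1 < (m - 1) * m powr (p - 1) + m powr (p - 1)" using b by linarith
  also have "\<dots> = m * m powr (p - 1)" by (simp add: algebra_simps)
  also have "\<dots> = m powr p" using m by (simp add: powr_mult_base)
  finally show ?thesis .
qed

lemma gain:
  fixes m p :: real assumes m: "m \<ge> 2" and p: "p > 1"
  shows "\<exists>\<eta>>0. \<exists>d0>0. \<forall>d. 0 \<le> d \<and> d \<le> d0 \<longrightarrow> \<bar>m - 1 - d\<bar> powr p + (1 + \<eta>) \<le> \<bar>m - d\<bar> powr p"
proof -
  define g where "g = (\<lambda>d::real. (m - d) powr p - (m - 1 - d) powr p)"
  define \<eta> where "\<eta> = (g 0 - 1) / 2"
  have g0: "g 0 > 1" using superadd[OF m p] unfolding g_def by simp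
  then have eta: "\<eta> > 0" unfolding \<eta>_def by simp
  have "isCont g 0" unfolding g_def using m by (intro continuous_intros) auto
  then have "g \<midarrow>0\<rightarrow> g 0" by (simp add: isCont_def)
  from LIM_D[OF this eta] obtain r where r: "r > 0" "\<And>d. d \<noteq> 0 \<and> norm (d - 0) < r \<Longrightarrow> norm (g d - g 0) < \<eta>" by blast
  define d0 where "d0 = min (r / 2) (1 / 2)"
  have "\<forall>d. 0 \<le> d \<and> d \<le> d0 \<longrightarrow> \<bar>m - 1 - d\<bar> powr p + (1 + \<eta>) \<le> \<bar>m - d\<bar> powr p"
  proof (intro allI impI)
    fix d assume d: "0 \<le> d \<and> d \<le> d0"
    have "g d \<ge> 1 + \<eta>"
    proof (cases "d = 0")
      case True then show ?thesis using g0 unfolding \<eta>_def by (simp add: field_simps)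
    next
      case False
      then have "\<bar>g d - g 0\<bar> < \<eta>" using r(2)[of d] d r(1) unfolding d0_def by auto
      then show ?thesis unfolding \<eta>_def by (smt (verit) field_sum_of_halves)
    qed
    moreover have "\<bar>m - 1 - d\<bar> = m - 1 - d" "\<bar>m - d\<bar> = m - d" using d m unfolding d0_def by auto
    ultimately show "\<bar>m - 1 - d\<bar> powr p + (1 + \<eta>) \<le> \<bar>m - d\<bar> powr p" unfolding g_def by simp
  qed
  moreover have "d0 > 0" using r unfolding d0_def by simp
  ultimately show ?thesis using eta by blast
qed

lemma fl0: fixes T z :: real shows "T > 0 \<Longrightarrow> 0 \<le> z \<Longrightarrow> z < T \<Longrightarrow> \<lfloor>z / T\<rfloor> = 0"
  by (simp add: floor_eq_iff)

lemma flm1: fixes T z :: real shows "T > 0 \<Longrightarrow> -T \<le> z \<Longrightarrow> z < 0 \<Longrightarrow> \<lfloor>z / T\<rfloor> = -1"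
  by (simp add: floor_eq_iff field_simps)

lemma dl_vals_pos: "T > 0 \<Longrightarrow> 0 \<le> h \<Longrightarrow> h < real T \<Longrightarrow> dl T a h y \<in> {0, 1}"
proof -
  assume T: "T > 0" and h: "0 \<le> h" "h < real T"
  define A where "A = (y - a) / real T"
  have e: "(y - a - h) / real T = A - h / real T" unfolding A_def by (simp add: diff_divide_distrib)
  have hT: "0 \<le> h / real T" "h / real T < 1" using T h by auto
  have "\<lfloor>A - h / real T\<rfloor> \<le> \<lfloor>A\<rfloor>" using hT by (intro floor_mono) auto
  moreover have "\<lfloor>A\<rfloor> \<le> \<lfloor>A - h / real T\<rfloor> + 1"
  proof -
    have "\<lfloor>A\<rfloor> \<le> \<lfloor>A - h / real T + 1\<rfloor>" using hT by (intro floor_mono) auto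
    then show ?thesis by simp
  qed
  ultimately have "\<lfloor>A\<rfloor> = \<lfloor>A - h / real T\<rfloor> \<or> \<lfloor>A\<rfloor> = \<lfloor>A - h / real T\<rfloor> + 1" by linarith
  moreover have "dl T a h y = real_of_int \<lfloor>A\<rfloor> - real_of_int \<lfloor>A - h / real T\<rfloor>"
    unfolding dl_def e A_def ..
  ultimately show ?thesis by auto
qed

lemma dl_vals_neg: "T > 0 \<Longrightarrow> h \<le> 0 \<Longrightarrow> - real T < h \<Longrightarrow> dl T a h y \<in> {0, -1}"
proof -
  assume T: "T > 0" and h: "h \<le> 0" "- real T < h"
  define A where "A = (y - a) / real T"
  have e: "(y - a - h) / real T = A - h / real T" unfolding A_def by (simp add: diff_divide_distrib)
  have hT: "h / real T \<le> 0" "-1 < h / real T" using T h by (auto simp: field_simps)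
  have "\<lfloor>A\<rfloor> \<le> \<lfloor>A - h / real T\<rfloor>" using hT by (intro floor_mono) auto
  moreover have "\<lfloor>A - h / real T\<rfloor> \<le> \<lfloor>A\<rfloor> + 1"
  proof -
    have "\<lfloor>A - h / real T\<rfloor> \<le> \<lfloor>A + 1\<rfloor>" using hT by (intro floor_mono) auto
    then show ?thesis by simp
  qed
  ultimately have "\<lfloor>A\<rfloor> = \<lfloor>A - h / real T\<rfloor> \<or> \<lfloor>A\<rfloor> + 1 = \<lfloor>A - h / real T\<rfloor>" by linarith
  moreover have "dl T a h y = real_of_int \<lfloor>A\<rfloor> - real_of_int \<lfloor>A - h / real T\<rfloor>"
    unfolding dl_def e A_def ..
  ultimately show ?thesis by auto
qed

lemma dl_meas[measurable]: "dl T a h \<in> borel_measurable borel"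
  unfolding dl_def by measurable

lemma refl_le:
  fixes q \<alpha> \<beta> g0 :: real and B G :: "real set"
  assumes B: "B \<in> sets borel" and G: "G \<in> sets borel"
    and BG: "\<And>y. y \<in> B \<Longrightarrow> \<alpha> + \<beta> - y \<in> G \<or> \<alpha> + \<beta> - y = g0"
  shows "(\<integral>\<^sup>+t. (\<integral>\<^sup>+y. ennreal (\<bar>t - y\<bar> powr (- q)) * indicator B y \<partial>lborel) * indicator {\<alpha>..<\<beta>} t \<partial>lborel)
       \<le> (\<integral>\<^sup>+t. (\<integral>\<^sup>+y. ennreal (\<bar>t - y\<bar> powr (- q)) * indicator G y \<partial>lborel) * indicator {\<alpha>..<\<beta>} t \<partial>lborel)"
proof -
  let ?w = "\<lambda>t y. ennreal (\<bar>t - y\<bar> powr (- q))"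
  have inner: "(\<integral>\<^sup>+y. ?w (\<alpha> + \<beta> - t) y * indicator B y \<partial>lborel) \<le> (\<integral>\<^sup>+y. ?w t y * indicator G y \<partial>lborel)" for t
  proof -
    have "(\<integral>\<^sup>+y. ?w (\<alpha> + \<beta> - t) y * indicator B y \<partial>lborel) = (\<integral>\<^sup>+y. ?w (\<alpha> + \<beta> - t) (- y + (\<alpha> + \<beta>)) * indicator B (- y + (\<alpha> + \<beta>)) \<partial>lborel)"
    proof -
      have "(\<integral>\<^sup>+y. ?w (\<alpha> + \<beta> - t) y * indicator B y \<partial>lborel) = (\<integral>\<^sup>+y. ?w (\<alpha> + \<beta> - t) (y + (\<alpha> + \<beta>)) * indicator B (y + (\<alpha> + \<beta>)) \<partial>lborel)"
        by (rule nn_shift) (use B in measurable)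
      also have "\<dots> = (\<integral>\<^sup>+y. ?w (\<alpha> + \<beta> - t) (- y + (\<alpha> + \<beta>)) * indicator B (- y + (\<alpha> + \<beta>)) \<partial>lborel)"
        by (rule nn_reflect) (use B in measurable)
      finally show ?thesis .
    qed
    also have "\<dots> \<le> (\<integral>\<^sup>+y. ?w t y * indicator G y + ?w t y * indicator {g0} y \<partial>lborel)"
      by (intro nn_integral_mono) (auto simp: indicator_def abs_minus_commute dest: BG)
    also have "\<dots> = (\<integral>\<^sup>+y. ?w t y * indicator G y \<partial>lborel) + (\<integral>\<^sup>+y. ?w t y * indicator {g0} y \<partial>lborel)"
      by (rule nn_integral_add) (use G in measurable)
    also have "(\<integral>\<^sup>+y. ?w t y * indicator {g0} y \<partial>lborel) = 0" by simp
    finally show ?thesis by simp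
  qed
  have mF: "(\<lambda>t. \<integral>\<^sup>+y. ?w t y * indicator B y \<partial>lborel) \<in> borel_measurable borel"
  proof -
    have "case_prod (\<lambda>t y. ?w t y * indicator B y) \<in> borel_measurable (lborel \<Otimes>\<^sub>M lborel)"
      using B by measurable
    then show ?thesis by (simp cong: measurable_cong_sets)
  qed
  have "(\<integral>\<^sup>+t. (\<integral>\<^sup>+y. ?w t y * indicator B y \<partial>lborel) * indicator {\<alpha>..<\<beta>} t \<partial>lborel)
     = (\<integral>\<^sup>+t. (\<integral>\<^sup>+y. ?w (- t + (\<alpha> + \<beta>)) y * indicator B y \<partial>lborel) * indicator {\<alpha>..<\<beta>} (- t + (\<alpha> + \<beta>)) \<partial>lborel)"
  proof -
    have "(\<integral>\<^sup>+t. (\<integral>\<^sup>+y. ?w t y * indicator B y \<partial>lborel) * indicator {\<alpha>..<\<beta>} t \<partial>lborel)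
       = (\<integral>\<^sup>+t. (\<integral>\<^sup>+y. ?w (t + (\<alpha> + \<beta>)) y * indicator B y \<partial>lborel) * indicator {\<alpha>..<\<beta>} (t + (\<alpha> + \<beta>)) \<partial>lborel)"
      by (rule nn_shift) (use mF in measurable)
    also have "\<dots> = (\<integral>\<^sup>+t. (\<integral>\<^sup>+y. ?w (- t + (\<alpha> + \<beta>)) y * indicator B y \<partial>lborel) * indicator {\<alpha>..<\<beta>} (- t + (\<alpha> + \<beta>)) \<partial>lborel)"
    proof (rule nn_reflect)
      have "(\<lambda>t. t + (\<alpha> + \<beta>)) \<in> borel_measurable borel" by measurable
      from measurable_compose[OF this mF] show "(\<lambda>t. (\<integral>\<^sup>+y. ?w (t + (\<alpha> + \<beta>)) y * indicator B y \<partial>lborel) * indicator {\<alpha>..<\<beta>} (t + (\<alpha> + \<beta>))) \<in> borel_measurable borel"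
        by measurable
    qed
    finally show ?thesis .
  qed
  also have "\<dots> \<le> (\<integral>\<^sup>+t. (\<integral>\<^sup>+y. ?w t y * indicator G y \<partial>lborel) * indicator {\<alpha>..<\<beta>} t
       + (\<integral>\<^sup>+y. ?w t y * indicator G y \<partial>lborel) * indicator {\<beta>} t \<partial>lborel)"
  proof (intro nn_integral_mono)
    fix t
    have "indicator {\<alpha>..<\<beta>} (- t + (\<alpha> + \<beta>)) \<le> (indicator {\<alpha>..<\<beta>} t + indicator {\<beta>} t :: ennreal)"
      by (auto simp: indicator_def)
    then have "(\<integral>\<^sup>+y. ?w (- t + (\<alpha> + \<beta>)) y * indicator B y \<partial>lborel) * indicator {\<alpha>..<\<beta>} (- t + (\<alpha> + \<beta>))
        \<le> (\<integral>\<^sup>+y. ?w t y * indicator G y \<partial>lborel) * (indicator {\<alpha>..<\<beta>} t + indicator {\<beta>} t)"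
      using inner[of t] by (intro mult_mono) (auto simp: add.commute)
    then show "(\<integral>\<^sup>+y. ?w (- t + (\<alpha> + \<beta>)) y * indicator B y \<partial>lborel) * indicator {\<alpha>..<\<beta>} (- t + (\<alpha> + \<beta>))
        \<le> (\<integral>\<^sup>+y. ?w t y * indicator G y \<partial>lborel) * indicator {\<alpha>..<\<beta>} t + (\<integral>\<^sup>+y. ?w t y * indicator G y \<partial>lborel) * indicator {\<beta>} t"
      by (simp add: distrib_left)
  qed
  also have "\<dots> = (\<integral>\<^sup>+t. (\<integral>\<^sup>+y. ?w t y * indicator G y \<partial>lborel) * indicator {\<alpha>..<\<beta>} t \<partial>lborel)
       + (\<integral>\<^sup>+t. (\<integral>\<^sup>+y. ?w t y * indicator G y \<partial>lborel) * indicator {\<beta>} t \<partial>lborel)"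
  proof (rule nn_integral_add)
    have "case_prod (\<lambda>t y. ?w t y * indicator G y) \<in> borel_measurable (lborel \<Otimes>\<^sub>M lborel)"
      using G by measurable
    then have "(\<lambda>t. \<integral>\<^sup>+y. ?w t y * indicator G y \<partial>lborel) \<in> borel_measurable borel"
      by (simp cong: measurable_cong_sets)
    then show "(\<lambda>t. (\<integral>\<^sup>+y. ?w t y * indicator G y \<partial>lborel) * indicator {\<alpha>..<\<beta>} t) \<in> borel_measurable lborel"
      "(\<lambda>t. (\<integral>\<^sup>+y. ?w t y * indicator G y \<partial>lborel) * indicator {\<beta>} t) \<in> borel_measurable lborel"
      by measurable
  qed
  also have "(\<integral>\<^sup>+t. (\<integral>\<^sup>+y. ?w t y * indicator G y \<partial>lborel) * indicator {\<beta>} t \<partial>lborel) = 0" by simp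
  finally show ?thesis by simp
qed



lemma floor_local:
  assumes T: "T > 0" and xj: "0 \<le> xj" "xj < real T" and a: "0 \<le> a" "a < real T"
   and rho: "0 < \<rho>" "\<rho> \<le> real T" "xj \<noteq> a \<Longrightarrow> \<rho> \<le> \<bar>xj - a\<bar> \<and> \<rho> \<le> real T - \<bar>xj - a\<bar>"
   and w: "\<bar>w - a\<bar> < \<rho>"
  shows "real_of_int \<lfloor>(w - xj) / real T\<rfloor> = (if xj = a then (if w < a then -1 else 0) else (if xj < a then 0 else -1))"
proof -
  have TT: "real T > 0" using T by simp
  show ?thesis
  proof (cases "xj = a")
    case True
    then show ?thesis using w rho fl0[OF TT, of "w - a"] flm1[OF TT, of "w - a"] by auto
  next
    case False
    then have r: "\<rho> \<le> \<bar>xj - a\<bar>" "\<rho> \<le> real T - \<bar>xj - a\<bar>" using rho(3) by auto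
    show ?thesis
    proof (cases "xj < a")
      case True
      then show ?thesis using False w r fl0[OF TT, of "w - xj"] by auto
    next
      case F2: False
      then show ?thesis using False w r flm1[OF TT, of "w - xj"] by auto
    qed
  qed
qed

lemma u_local:
  assumes T: "T > 0" and x: "\<forall>j\<in>{1..T}. 0 \<le> x j \<and> x j < real T" and a: "0 \<le> a" "a < real T"
   and rho: "0 < \<rho>" "\<rho> \<le> real T" "\<forall>j\<in>{1..T}. x j \<noteq> a \<longrightarrow> \<rho> \<le> \<bar>x j - a\<bar> \<and> \<rho> \<le> real T - \<bar>x j - a\<bar>"
   and y: "\<bar>y - a\<bar> < \<rho>" and z: "\<bar>z - a\<bar> < \<rho>"
  shows "u_conf T x y - u_conf T x z = (y - z) + real (card {j\<in>{1..T}. x j = a}) * (of_bool (y < a) - of_bool (z < a))"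
proof -
  have per: "real_of_int \<lfloor>(y - x j) / real T\<rfloor> - real_of_int \<lfloor>(z - x j) / real T\<rfloor>
      = (if x j = a then of_bool (z < a) - of_bool (y < a) else 0)" if j: "j \<in> {1..T}" for j
  proof -
    have xj: "0 \<le> x j" "x j < real T" using x j by auto
    have r3: "x j \<noteq> a \<Longrightarrow> \<rho> \<le> \<bar>x j - a\<bar> \<and> \<rho> \<le> real T - \<bar>x j - a\<bar>" using rho(3) j by auto
    show ?thesis
      using floor_local[OF T xj a rho(1,2) r3 y] floor_local[OF T xj a rho(1,2) r3 z] by auto
  qed
  have "(\<Sum>j\<in>{1..T}. real_of_int \<lfloor>(y - x j) / real T\<rfloor>) - (\<Sum>j\<in>{1..T}. real_of_int \<lfloor>(z - x j) / real T\<rfloor>)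
      = (\<Sum>j\<in>{1..T}. (if x j = a then of_bool (z < a) - of_bool (y < a) else 0))"
    by (simp add: sum_subtractf[symmetric] per)
  also have "\<dots> = (\<Sum>j\<in>{j\<in>{1..T}. x j = a}. of_bool (z < a) - of_bool (y < a))"
    by (rule sym, rule sum.inter_filter) simp
  also have "\<dots> = real (card {j\<in>{1..T}. x j = a}) * (of_bool (z < a) - of_bool (y < a))"
    by simp
  finally show ?thesis unfolding u_conf_def by (simp add: algebra_simps)
qed



lemma exists_rho:
  fixes x :: "nat \<Rightarrow> real" and T :: nat and a d0 :: real
  assumes T: "T > 0" and d0: "d0 > 0"
    and x: "\<forall>j\<in>{1..T}. 0 \<le> x j \<and> x j < real T" and a: "0 \<le> a" "a < real T"
  shows "\<exists>\<rho>>0. \<rho> \<le> real T / 4 \<and> \<rho> \<le> d0 / 2 \<and> (\<forall>j\<in>{1..T}. x j \<noteq> a \<longrightarrow> \<rho> \<le> \<bar>x j - a\<bar> \<and> \<rho> \<le> real T - \<bar>x j - a\<bar>)"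
proof -
  define S where "S = insert (real T / 4) (insert (d0 / 2) ((\<lambda>j. min \<bar>x j - a\<bar> (real T - \<bar>x j - a\<bar>)) ` {j\<in>{1..T}. x j \<noteq> a}))"
  have fin: "finite S" unfolding S_def by simp
  have ne: "S \<noteq> {}" unfolding S_def by simp
  have pos: "\<forall>v\<in>S. v > 0"
  proof
    fix v assume "v \<in> S"
    then consider "v = real T / 4" | "v = d0 / 2" | j where "j \<in> {1..T}" "x j \<noteq> a" "v = min \<bar>x j - a\<bar> (real T - \<bar>x j - a\<bar>)"
      unfolding S_def by auto
    then show "v > 0"
    proof cases
      case 3
      then have "0 \<le> x j" "x j < real T" using x by auto
      then show ?thesis using 3 a by auto
    qed (use T d0 in auto)
  qed
  define \<rho> where "\<rho> = Min S"
  have "\<rho> > 0" unfolding \<rho>_def using fin ne pos by (simp add: Min_gr_iff)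
  moreover have "\<rho> \<le> real T / 4" "\<rho> \<le> d0 / 2"
  proof -
    have m1: "real T / 4 \<in> S" and m2: "d0 / 2 \<in> S" unfolding S_def by simp_all
    show "\<rho> \<le> real T / 4" unfolding \<rho>_def by (rule Min_le[OF fin m1])
    show "\<rho> \<le> d0 / 2" unfolding \<rho>_def by (rule Min_le[OF fin m2])
  qed
  moreover have "\<forall>j\<in>{1..T}. x j \<noteq> a \<longrightarrow> \<rho> \<le> \<bar>x j - a\<bar> \<and> \<rho> \<le> real T - \<bar>x j - a\<bar>"
  proof (intro ballI impI)
    fix j assume "j \<in> {1..T}" "x j \<noteq> a"
    then have "min \<bar>x j - a\<bar> (real T - \<bar>x j - a\<bar>) \<in> S" unfolding S_def by auto
    then have "\<rho> \<le> min \<bar>x j - a\<bar> (real T - \<bar>x j - a\<bar>)" unfolding \<rho>_def using fin by (rule Min_le[rotated])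
    then show "\<rho> \<le> \<bar>x j - a\<bar> \<and> \<rho> \<le> real T - \<bar>x j - a\<bar>" by simp
  qed
  ultimately show ?thesis by blast
qed



lemma Kf_meas2[measurable]: "Kf s p T x t \<in> borel_measurable borel"
  unfolding Kf_def by measurable

lemma per_h_pos:
  fixes s p :: real and T :: nat and x :: "nat \<Rightarrow> real" and i :: nat
  assumes T: "T > 0" and s: "0 < s" "s < 1" and p: "1 < p" and sp: "s * p < 1"
    and x: "\<forall>j\<in>{1..T}. 0 \<le> x j \<and> x j < real T" and i: "i \<in> {1..T}"
    and m: "real (card {j\<in>{1..T}. x j = x i}) = m"
    and gain: "\<forall>d. 0 \<le> d \<and> d \<le> d0 \<longrightarrow> \<bar>m - 1 - d\<bar> powr p + (1 + \<eta>) \<le> \<bar>m - d\<bar> powr p" and eta: "\<eta> > 0"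
    and rho: "\<rho> > 0" "\<rho> \<le> real T / 4" "\<rho> \<le> d0 / 2" "\<rho> \<le> 1"
      "\<forall>j\<in>{1..T}. x j \<noteq> x i \<longrightarrow> \<rho> \<le> \<bar>x j - x i\<bar> \<and> \<rho> \<le> real T - \<bar>x j - x i\<bar>"
    and Mf: "(\<integral>\<^sup>+z. ennreal (\<bar>z\<bar> powr (- (1 + s * p))) * indicator {z. \<rho> / 2 \<le> \<bar>z\<bar>} z \<partial>lborel) = ennreal Mr" "Mr \<ge> 0"
    and h: "0 < h" "h < \<rho> / 2"
  shows "F_energy s p T (rigid_var x i h) - F_energy s p T x
     \<le> 2 * (real T powr p * Mr * h) - 2 * \<eta> * (h * h * (2 * h) powr (- (1 + s * p)))"
proof -
  define a where "a = x i"
  define q where "q = 1 + s * p"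
  define x' where "x' = rigid_var x i h"
  define D where "D = dl T a h"
  define K where "K = Kf s p T x"
  define K' where "K' = Kf s p T x'"
  define u where "u = u_conf T x"
  define c0 where "c0 = a - real T / 2"
  define w where "w = (\<lambda>t y. ennreal (\<bar>t - y\<bar> powr (- q)))"
  define I where "I = {a..<a+h}"
  define L where "L = {a-\<rho><..<a}"
  define Rg where "Rg = {a+h..<a+\<rho>}"
  have TT: "real T \<ge> 1" "real T > 0" using T by auto
  have a0: "0 \<le> a" "a < real T" using x i unfolding a_def by auto
  have q1: "q > 1" unfolding q_def using s p by simp
  have Dvals: "D y \<in> {0, 1}" for y unfolding D_def
    by (rule dl_vals_pos) (use T h rho in auto)
  have dI: "D t = 1" if "t \<in> I" for t
  proof -
    have "\<lfloor>(t - a) / real T\<rfloor> = 0" using that h rho TT unfolding I_def by (intro fl0) auto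
    moreover have "\<lfloor>(t - a - h) / real T\<rfloor> = -1" using that h rho TT unfolding I_def by (intro flm1) auto
    ultimately show ?thesis unfolding D_def dl_def by simp
  qed
  have dW: "D t = 0" if "t \<in> {c0..<c0 + real T}" "t \<notin> I" for t
  proof (cases "t < a")
    case True
    have "\<lfloor>(t - a) / real T\<rfloor> = -1" using that True TT unfolding c0_def by (intro flm1) auto
    moreover have "\<lfloor>(t - a - h) / real T\<rfloor> = -1" using that True TT h rho unfolding c0_def by (intro flm1) auto
    ultimately show ?thesis unfolding D_def dl_def by simp
  next
    case False
    then have "t \<ge> a + h" using that unfolding I_def by auto
    have "\<lfloor>(t - a) / real T\<rfloor> = 0" using that False TT h unfolding c0_def by (intro fl0) auto
    moreover have "\<lfloor>(t - a - h) / real T\<rfloor> = 0" using that \<open>t \<ge> a + h\<close> TT h rho unfolding c0_def by (intro fl0) auto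
    ultimately show ?thesis unfolding D_def dl_def by simp
  qed
  have IW: "I \<subseteq> {c0..<c0 + real T}" unfolding I_def c0_def using h rho by auto
  have K'eq: "K' t y = ennreal (\<bar>u t - u y + (D t - D y)\<bar> powr p / \<bar>t - y\<bar> powr q)" for t y
    unfolding K'_def Kf_def x'_def u_def D_def a_def q_def using u_conf_rigid[OF i] by (simp add: algebra_simps)
  have Keq: "K t y = ennreal (\<bar>u t - u y\<bar> powr p / \<bar>t - y\<bar> powr q)" for t y
    unfolding K_def Kf_def u_def q_def by simp
  have Dm[measurable]: "D \<in> borel_measurable borel" unfolding D_def by measurable
  have Dper: "D (t + real T) = D t" for t unfolding D_def by (rule dl_periodic[OF T])
  have D01: "(D t \<noteq> 0 \<and> D y = 0) \<or> (D t = 0 \<and> D y \<noteq> 0)" if "D t \<noteq> D y" for t y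
    using Dvals[of t] Dvals[of y] that by auto
  define E where "E = (\<integral>\<^sup>+t. (\<integral>\<^sup>+y. K t y * of_bool (D t = D y) \<partial>lborel) * indicator {0..<real T} t \<partial>lborel)"
  define P where "P = (\<integral>\<^sup>+t. (\<integral>\<^sup>+y. K t y * of_bool (D t \<noteq> 0 \<and> D y = 0) \<partial>lborel) * indicator {c0..<c0 + real T} t \<partial>lborel)"
  define P' where "P' = (\<integral>\<^sup>+t. (\<integral>\<^sup>+y. K' t y * of_bool (D t \<noteq> 0 \<and> D y = 0) \<partial>lborel) * indicator {c0..<c0 + real T} t \<partial>lborel)"
  have FFx: "FF s p T x = E + 2 * P"
    unfolding FF_def E_def P_def K_def[symmetric]
    by (rule decomp) (auto simp: K_def Kf_sym Kf_periodic[OF T] Dper D01 T)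
  have FFx': "FF s p T x' = E + 2 * P'"
  proof -
    have "FF s p T x' = (\<integral>\<^sup>+t. (\<integral>\<^sup>+y. K' t y * of_bool (D t = D y) \<partial>lborel) * indicator {0..<real T} t \<partial>lborel) + 2 * P'"
      unfolding FF_def P'_def K'_def[symmetric]
      by (rule decomp) (auto simp: K'_def Kf_sym Kf_periodic[OF T] Dper D01 T)
    also have "(\<lambda>t y. K' t y * of_bool (D t = D y)) = (\<lambda>t y. K t y * of_bool (D t = D y))"
      by (intro ext) (auto simp: K'eq Keq)
    finally show ?thesis unfolding E_def .
  qed
  have fin: "FF s p T x < \<infinity>" by (rule FF_finite[OF T s(1) s(2) _ sp x]) (use p in simp)
  have ul: "u y - u z = (y - z) + m * (of_bool (y < a) - of_bool (z < a))" if "\<bar>y - a\<bar> < \<rho>" "\<bar>z - a\<bar> < \<rho>" for y z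
    unfolding u_def m[symmetric] a_def
    by (rule u_local[OF T x]) (use a0 rho TT that in \<open>auto simp: a_def\<close>)
  have restr: "(\<integral>\<^sup>+y. Q t y * of_bool (D t \<noteq> 0 \<and> D y = 0) \<partial>lborel) * indicator {c0..<c0 + real T} t
      = (\<integral>\<^sup>+y. Q t y * of_bool (D y = 0) \<partial>lborel) * indicator I t" for Q :: "real \<Rightarrow> real \<Rightarrow> ennreal" and t
  proof (cases "t \<in> I")
    case True
    then show ?thesis using IW dI[OF True] by (auto simp: indicator_def)
  next
    case False
    show ?thesis
    proof (cases "t \<in> {c0..<c0 + real T}")
      case True
      then show ?thesis using dW[OF True False] False by (simp add: indicator_def)
    qed (use False in \<open>simp add: indicator_def\<close>)
  qed
  have PI: "P = (\<integral>\<^sup>+t. (\<integral>\<^sup>+y. K t y * of_bool (D y = 0) \<partial>lborel) * indicator I t \<partial>lborel)"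
    unfolding P_def by (intro nn_integral_cong) (rule restr)
  have P'I: "P' = (\<integral>\<^sup>+t. (\<integral>\<^sup>+y. K' t y * of_bool (D y = 0) \<partial>lborel) * indicator I t \<partial>lborel)"
    unfolding P'_def by (intro nn_integral_cong) (rule restr)
  have tI: "\<bar>t - a\<bar> < h" "a \<le> t" "t < a + h" if "t \<in> I" for t using that unfolding I_def by auto
  have U: "(\<integral>\<^sup>+y. K' t y * of_bool (D y = 0) \<partial>lborel)
      \<le> (\<integral>\<^sup>+y. K' t y * indicator L y \<partial>lborel) + (\<integral>\<^sup>+y. w t y * indicator Rg y \<partial>lborel) + ennreal (real T powr p) * ennreal Mr"
    if t: "t \<in> I" for t
  proof -
    have pw: "K' t y * of_bool (D y = 0) \<le> K' t y * indicator L y + w t y * indicator Rg y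
       + ennreal (real T powr p * \<bar>t - y\<bar> powr (- q)) * indicator {z. \<rho> / 2 \<le> \<bar>z\<bar>} (y - t)" for y
    proof (cases "D y = 0")
      case False then show ?thesis by simp
    next
      case Dy: True
      consider "y \<in> L" | "y \<in> Rg" | "y \<notin> L" "y \<notin> Rg" by blast
      then show ?thesis
      proof cases
        case 1 then show ?thesis by (intro add_increasing2) (auto simp: indicator_def)
      next
        case 2
        then have y: "\<bar>y - a\<bar> < \<rho>" "a + h \<le> y" "y < a + \<rho>" unfolding Rg_def using h by auto
        have "u t - u y = t - y" using ul[of t y] y tI[OF t] h by auto
        then have "K' t y = ennreal (\<bar>t - y + 1\<bar> powr p / \<bar>t - y\<bar> powr q)"
          using K'eq[of t y] dI[OF t] Dy by simp
        also have "\<dots> \<le> ennreal (1 / \<bar>t - y\<bar> powr q)"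
        proof (intro ennreal_leI divide_right_mono powr_le1)
          show "\<bar>\<bar>t - y + 1\<bar>\<bar> \<le> 1" using y tI[OF t] rho by auto
        qed (use p in auto)
        also have "\<dots> = w t y" unfolding w_def by (simp add: powr_minus_divide)
        finally show ?thesis using 2 by (intro add_increasing2 add_increasing) (auto simp: indicator_def)
      next
        case 3
        have far: "\<rho> / 2 \<le> \<bar>y - t\<bar>"
        proof (cases "\<bar>y - a\<bar> < \<rho>")
          case True
          have "y \<notin> I" using dI Dy by auto
          then show ?thesis using True 3 unfolding L_def Rg_def I_def by auto
        next
          case False
          have "\<bar>y - a\<bar> \<le> \<bar>y - t\<bar> + \<bar>t - a\<bar>" using abs_triangle_ineq[of "y - t" "t - a"] by simp
          then show ?thesis using False tI[OF t] h by linarith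
        qed
        have "K' t y \<le> ennreal (real T powr p * \<bar>t - y\<bar> powr (- q))"
          unfolding K'_def q_def using Kf_le_far[OF T] p by simp
        then show ?thesis using far Dy by (intro add_increasing) (auto simp: indicator_def)
      qed
    qed
    have "(\<integral>\<^sup>+y. K' t y * of_bool (D y = 0) \<partial>lborel) \<le> (\<integral>\<^sup>+y. K' t y * indicator L y + w t y * indicator Rg y
       + ennreal (real T powr p * \<bar>t - y\<bar> powr (- q)) * indicator {z. \<rho> / 2 \<le> \<bar>z\<bar>} (y - t) \<partial>lborel)"
      by (intro nn_integral_mono pw)
    also have "\<dots> = (\<integral>\<^sup>+y. K' t y * indicator L y \<partial>lborel) + (\<integral>\<^sup>+y. w t y * indicator Rg y \<partial>lborel)
       + (\<integral>\<^sup>+y. ennreal (real T powr p * \<bar>t - y\<bar> powr (- q)) * indicator {z. \<rho> / 2 \<le> \<bar>z\<bar>} (y - t) \<partial>lborel)"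
    proof -
      have mA: "(\<lambda>y. K' t y * indicator L y) \<in> borel_measurable lborel" unfolding K'_def L_def by measurable
      have mB: "(\<lambda>y. w t y * indicator Rg y) \<in> borel_measurable lborel" unfolding w_def Rg_def by measurable
      have mC: "(\<lambda>y. ennreal (real T powr p * \<bar>t - y\<bar> powr (- q)) * indicator {z. \<rho> / 2 \<le> \<bar>z\<bar>} (y - t)) \<in> borel_measurable lborel"
        by measurable
      show ?thesis by (simp only: nn_integral_add[OF borel_measurable_add[OF mA mB] mC] nn_integral_add[OF mA mB])
    qed
    also have "(\<integral>\<^sup>+y. ennreal (real T powr p * \<bar>t - y\<bar> powr (- q)) * indicator {z. \<rho> / 2 \<le> \<bar>z\<bar>} (y - t) \<partial>lborel)
        = ennreal (real T powr p) * ennreal Mr"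
    proof -
      have "(\<integral>\<^sup>+y. ennreal (real T powr p * \<bar>t - y\<bar> powr (- q)) * indicator {z. \<rho> / 2 \<le> \<bar>z\<bar>} (y - t) \<partial>lborel)
          = (\<integral>\<^sup>+y. ennreal (real T powr p * \<bar>t - (y + t)\<bar> powr (- q)) * indicator {z. \<rho> / 2 \<le> \<bar>z\<bar>} (y + t - t) \<partial>lborel)"
        by (rule nn_shift) measurable
      also have "\<dots> = (\<integral>\<^sup>+y. ennreal (real T powr p) * (ennreal (\<bar>y\<bar> powr (- q)) * indicator {z. \<rho> / 2 \<le> \<bar>z\<bar>} y) \<partial>lborel)"
        by (intro nn_integral_cong) (simp add: ennreal_mult mult.assoc)
      also have "\<dots> = ennreal (real T powr p) * (\<integral>\<^sup>+y. ennreal (\<bar>y\<bar> powr (- q)) * indicator {z. \<rho> / 2 \<le> \<bar>z\<bar>} y \<partial>lborel)"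
        by (rule nn_integral_cmult) measurable
      also have "\<dots> = ennreal (real T powr p) * ennreal Mr" unfolding q_def by (simp only: Mf(1))
      finally show ?thesis .
    qed
    finally show ?thesis .
  qed
  have Lo: "(\<integral>\<^sup>+y. K' t y * indicator L y \<partial>lborel) + ennreal (1 + \<eta>) * (\<integral>\<^sup>+y. w t y * indicator L y \<partial>lborel)
      \<le> (\<integral>\<^sup>+y. K t y * of_bool (D y = 0) \<partial>lborel)" if t: "t \<in> I" for t
  proof -
    have pw: "(K' t y + ennreal (1 + \<eta>) * w t y) * indicator L y \<le> K t y * of_bool (D y = 0)" for y
    proof (cases "y \<in> L")
      case False then show ?thesis by simp
    next
      case True
      have y: "\<bar>y - a\<bar> < \<rho>" "a - \<rho> < y" "y < a" using True rho unfolding L_def by auto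
      have Dy: "D y = 0" using y rho TT by (intro dW) (auto simp: I_def c0_def)
      have uu: "u t - u y = t - y - m" using ul[of t y] y tI[OF t] h by auto
      define d where "d = t - y"
      have d: "0 < d" "d \<le> d0" using y tI[OF t] h rho unfolding d_def by auto
      have g: "\<bar>m - 1 - d\<bar> powr p + (1 + \<eta>) \<le> \<bar>m - d\<bar> powr p" using gain d by auto
      have K'v: "K' t y = ennreal (\<bar>m - 1 - d\<bar> powr p / d powr q)"
      proof -
        have "\<bar>u t - u y + (D t - D y)\<bar> = \<bar>m - 1 - d\<bar>" using uu dI[OF t] Dy unfolding d_def by simp
        then show ?thesis using K'eq[of t y] d unfolding d_def by simp
      qed
      have Kv: "K t y = ennreal (\<bar>m - d\<bar> powr p / d powr q)"
      proof -
        have "\<bar>u t - u y\<bar> = \<bar>m - d\<bar>" using uu unfolding d_def by simp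
        then show ?thesis using Keq[of t y] d unfolding d_def by simp
      qed
      have wv: "w t y = ennreal (1 / d powr q)" using d unfolding w_def d_def by (simp add: powr_minus_divide)
      have "\<bar>m - 1 - d\<bar> powr p / d powr q + (1 + \<eta>) * (1 / d powr q) = (\<bar>m - 1 - d\<bar> powr p + (1 + \<eta>)) / d powr q"
        by (simp add: add_divide_distrib)
      also have "\<dots> \<le> \<bar>m - d\<bar> powr p / d powr q" using g d by (intro divide_right_mono) auto
      finally have r: "\<bar>m - 1 - d\<bar> powr p / d powr q + (1 + \<eta>) * (1 / d powr q) \<le> \<bar>m - d\<bar> powr p / d powr q" .
      have "K' t y + ennreal (1 + \<eta>) * w t y = ennreal (\<bar>m - 1 - d\<bar> powr p / d powr q + (1 + \<eta>) * (1 / d powr q))"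
      proof -
        have e1: "ennreal (1 + \<eta>) * ennreal (1 / d powr q) = ennreal ((1 + \<eta>) * (1 / d powr q))"
          by (rule ennreal_mult[symmetric]) (use eta in auto)
        have e2: "ennreal (\<bar>m - 1 - d\<bar> powr p / d powr q) + ennreal ((1 + \<eta>) * (1 / d powr q))
            = ennreal (\<bar>m - 1 - d\<bar> powr p / d powr q + (1 + \<eta>) * (1 / d powr q))"
          by (rule ennreal_plus[symmetric]) (use eta in auto)
        show ?thesis unfolding K'v wv e1 e2 ..
      qed
      also have "\<dots> \<le> K t y" unfolding Kv using r by (rule ennreal_leI)
      finally show ?thesis using True Dy by simp
    qed
    have mA: "(\<lambda>y. K' t y * indicator L y) \<in> borel_measurable lborel" unfolding K'_def L_def by measurable
    have mB: "(\<lambda>y. w t y * indicator L y) \<in> borel_measurable lborel" unfolding w_def L_def by measurable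
    have "(\<integral>\<^sup>+y. K' t y * indicator L y \<partial>lborel) + ennreal (1 + \<eta>) * (\<integral>\<^sup>+y. w t y * indicator L y \<partial>lborel)
        = (\<integral>\<^sup>+y. K' t y * indicator L y + ennreal (1 + \<eta>) * (w t y * indicator L y) \<partial>lborel)"
      by (simp only: nn_integral_add[OF mA] nn_integral_cmult[OF mB] borel_measurable_times_ennreal[OF borel_measurable_const mB])
    also have "\<dots> \<le> (\<integral>\<^sup>+y. K t y * of_bool (D y = 0) \<partial>lborel)"
      by (intro nn_integral_mono) (use pw in \<open>simp add: distrib_right mult.assoc\<close>)
    finally show ?thesis .
  qed
  define N' where "N' = (\<integral>\<^sup>+t. (\<integral>\<^sup>+y. K' t y * indicator L y \<partial>lborel) * indicator I t \<partial>lborel)"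
  define R where "R = (\<integral>\<^sup>+t. (\<integral>\<^sup>+y. w t y * indicator Rg y \<partial>lborel) * indicator I t \<partial>lborel)"
  define J where "J = (\<integral>\<^sup>+t. (\<integral>\<^sup>+y. w t y * indicator L y \<partial>lborel) * indicator I t \<partial>lborel)"
  have mw[measurable]: "case_prod w \<in> borel_measurable (lborel \<Otimes>\<^sub>M lborel)" unfolding w_def by measurable
  have mK'[measurable]: "case_prod K' \<in> borel_measurable (lborel \<Otimes>\<^sub>M lborel)" unfolding K'_def by measurable
  have mK[measurable]: "case_prod K \<in> borel_measurable (lborel \<Otimes>\<^sub>M lborel)" unfolding K_def by measurable
  have mN: "(\<lambda>t. (\<integral>\<^sup>+y. K' t y * indicator L y \<partial>lborel) * indicator I t) \<in> borel_measurable lborel"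
    unfolding L_def I_def by measurable
  have mR: "(\<lambda>t. (\<integral>\<^sup>+y. w t y * indicator Rg y \<partial>lborel) * indicator I t) \<in> borel_measurable lborel"
    unfolding Rg_def I_def by measurable
  have mJ: "(\<lambda>t. (\<integral>\<^sup>+y. w t y * indicator L y \<partial>lborel) * indicator I t) \<in> borel_measurable lborel"
    unfolding L_def I_def by measurable
  have mI: "(\<lambda>t. ennreal (real T powr p) * ennreal Mr * indicator I t) \<in> borel_measurable lborel"
    unfolding I_def by measurable
  have b1: "P' \<le> N' + R + ennreal (real T powr p * Mr * h)"
  proof -
    have "P' \<le> (\<integral>\<^sup>+t. (\<integral>\<^sup>+y. K' t y * indicator L y \<partial>lborel) * indicator I t + (\<integral>\<^sup>+y. w t y * indicator Rg y \<partial>lborel) * indicator I t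
        + ennreal (real T powr p) * ennreal Mr * indicator I t \<partial>lborel)"
      unfolding P'I
    proof (intro nn_integral_mono)
      fix t
      show "(\<integral>\<^sup>+y. K' t y * of_bool (D y = 0) \<partial>lborel) * indicator I t
        \<le> (\<integral>\<^sup>+y. K' t y * indicator L y \<partial>lborel) * indicator I t + (\<integral>\<^sup>+y. w t y * indicator Rg y \<partial>lborel) * indicator I t
        + ennreal (real T powr p) * ennreal Mr * indicator I t"
        using U[of t] by (cases "t \<in> I") auto
    qed
    also have "\<dots> = N' + R + (\<integral>\<^sup>+t. ennreal (real T powr p) * ennreal Mr * indicator I t \<partial>lborel)"
      unfolding N'_def R_def
      by (simp only: nn_integral_add[OF borel_measurable_add[OF mN mR] mI] nn_integral_add[OF mN mR])
    also have "(\<integral>\<^sup>+t. ennreal (real T powr p) * ennreal Mr * indicator I t \<partial>lborel) = ennreal (real T powr p * Mr * h)"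
      unfolding I_def using h Mf(2) by (simp add: nn_integral_cmult_indicator ennreal_mult)
    finally show ?thesis .
  qed
  have b2: "N' + ennreal (1 + \<eta>) * J \<le> P"
  proof -
    have "N' + ennreal (1 + \<eta>) * J = (\<integral>\<^sup>+t. (\<integral>\<^sup>+y. K' t y * indicator L y \<partial>lborel) * indicator I t
       + ennreal (1 + \<eta>) * ((\<integral>\<^sup>+y. w t y * indicator L y \<partial>lborel) * indicator I t) \<partial>lborel)"
      unfolding N'_def J_def
      by (simp only: nn_integral_add[OF mN borel_measurable_times_ennreal[OF borel_measurable_const mJ]] nn_integral_cmult[OF mJ])
    also have "\<dots> \<le> P" unfolding PI
    proof (intro nn_integral_mono)
      fix t
      show "(\<integral>\<^sup>+y. K' t y * indicator L y \<partial>lborel) * indicator I t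
       + ennreal (1 + \<eta>) * ((\<integral>\<^sup>+y. w t y * indicator L y \<partial>lborel) * indicator I t)
       \<le> (\<integral>\<^sup>+y. K t y * of_bool (D y = 0) \<partial>lborel) * indicator I t"
        using Lo[of t] by (cases "t \<in> I") auto
    qed
    finally show ?thesis .
  qed
  have b3: "R \<le> J" unfolding R_def J_def w_def I_def
  proof (rule refl_le)
    fix y assume "y \<in> Rg"
    then show "a + (a + h) - y \<in> L \<or> a + (a + h) - y = a" unfolding Rg_def L_def using h by auto
  qed (auto simp: Rg_def L_def)
  have b4: "ennreal (h * h * (2 * h) powr (- q)) \<le> J"
  proof -
    have "(\<integral>\<^sup>+t. (\<integral>\<^sup>+y. ennreal ((2 * h) powr (- q)) * indicator {a-h<..<a} y \<partial>lborel) * indicator I t \<partial>lborel) \<le> J"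
      unfolding J_def
    proof (intro nn_integral_mono)
      fix t
      show "(\<integral>\<^sup>+y. ennreal ((2 * h) powr (- q)) * indicator {a-h<..<a} y \<partial>lborel) * indicator I t
          \<le> (\<integral>\<^sup>+y. w t y * indicator L y \<partial>lborel) * indicator I t"
      proof (cases "t \<in> I")
        case tI: True
        have "(\<integral>\<^sup>+y. ennreal ((2 * h) powr (- q)) * indicator {a-h<..<a} y \<partial>lborel) \<le> (\<integral>\<^sup>+y. w t y * indicator L y \<partial>lborel)"
        proof (intro nn_integral_mono)
          fix y
          show "ennreal ((2 * h) powr (- q)) * indicator {a-h<..<a} y \<le> w t y * indicator L y"
          proof (cases "y \<in> {a-h<..<a}")
            case True
            then have "0 < \<bar>t - y\<bar>" "\<bar>t - y\<bar> \<le> 2 * h" using tI unfolding I_def by auto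
            then have "(2 * h) powr (- q) \<le> \<bar>t - y\<bar> powr (- q)" using q1 by (intro powr_mono2') auto
            moreover have "y \<in> L" using True h rho unfolding L_def by auto
            ultimately show ?thesis using True unfolding w_def by (simp add: ennreal_leI)
          qed simp
        qed
        then show ?thesis using tI by simp
      qed simp
    qed
    moreover have "(\<integral>\<^sup>+t. (\<integral>\<^sup>+y. ennreal ((2 * h) powr (- q)) * indicator {a-h<..<a} y \<partial>lborel) * indicator I t \<partial>lborel)
        = ennreal (h * h * (2 * h) powr (- q))"
      unfolding I_def using h by (simp add: nn_integral_cmult_indicator nn_integral_multc ennreal_mult[symmetric] mult_ac)
    ultimately show ?thesis by simp
  qed
  have "enn2real (FF s p T x') - enn2real (FF s p T x) \<le> 2 * (real T powr p * Mr * h) - 2 * \<eta> * (h * h * (2 * h) powr (- q))"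
    by (rule assemble[OF FFx FFx' fin b1 b2 b3 b4 eta]) (use Mf(2) h in simp)
  then show ?thesis unfolding F_energy_FF x'_def q_def .
qed

lemma per_h_neg:
  fixes s p :: real and T :: nat and x :: "nat \<Rightarrow> real" and i :: nat
  assumes T: "T > 0" and s: "0 < s" "s < 1" and p: "1 < p" and sp: "s * p < 1"
    and x: "\<forall>j\<in>{1..T}. 0 \<le> x j \<and> x j < real T" and i: "i \<in> {1..T}"
    and m: "real (card {j\<in>{1..T}. x j = x i}) = m"
    and gain: "\<forall>d. 0 \<le> d \<and> d \<le> d0 \<longrightarrow> \<bar>m - 1 - d\<bar> powr p + (1 + \<eta>) \<le> \<bar>m - d\<bar> powr p" and eta: "\<eta> > 0"
    and rho: "\<rho> > 0" "\<rho> \<le> real T / 4" "\<rho> \<le> d0 / 2" "\<rho> \<le> 1"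
      "\<forall>j\<in>{1..T}. x j \<noteq> x i \<longrightarrow> \<rho> \<le> \<bar>x j - x i\<bar> \<and> \<rho> \<le> real T - \<bar>x j - x i\<bar>"
    and Mf: "(\<integral>\<^sup>+z. ennreal (\<bar>z\<bar> powr (- (1 + s * p))) * indicator {z. \<rho> / 2 \<le> \<bar>z\<bar>} z \<partial>lborel) = ennreal Mr" "Mr \<ge> 0"
    and h: "h < 0" "- h < \<rho> / 2"
  shows "F_energy s p T (rigid_var x i h) - F_energy s p T x
     \<le> 2 * (real T powr p * Mr * (- h)) - 2 * \<eta> * ((- h) * (- h) * (2 * (- h)) powr (- (1 + s * p)))"
proof -
  define a where "a = x i"
  define q where "q = 1 + s * p"
  define x' where "x' = rigid_var x i h"
  define D where "D = dl T a h"
  define K where "K = Kf s p T x"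
  define K' where "K' = Kf s p T x'"
  define u where "u = u_conf T x"
  define c0 where "c0 = a - real T / 2"
  define w where "w = (\<lambda>t y. ennreal (\<bar>t - y\<bar> powr (- q)))"
  define I where "I = {a+h..<a}"
  define L where "L = {a..<a+\<rho>}"
  define Rg where "Rg = {a-\<rho><..<a+h}"
  have TT: "real T \<ge> 1" "real T > 0" using T by auto
  have a0: "0 \<le> a" "a < real T" using x i unfolding a_def by auto
  have q1: "q > 1" unfolding q_def using s p by simp
  have Dvals: "D y \<in> {0, -1}" for y unfolding D_def
    by (rule dl_vals_neg) (use T h rho in auto)
  have dI: "D t = -1" if "t \<in> I" for t
  proof -
    have "\<lfloor>(t - a) / real T\<rfloor> = -1" using that h rho TT unfolding I_def by (intro flm1) auto
    moreover have "\<lfloor>(t - a - h) / real T\<rfloor> = 0" using that h rho TT unfolding I_def by (intro fl0) auto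
    ultimately show ?thesis unfolding D_def dl_def by simp
  qed
  have dW: "D t = 0" if "t \<in> {c0..<c0 + real T}" "t \<notin> I" for t
  proof (cases "t < a")
    case True
    then have "t < a + h" using that unfolding I_def by auto
    have "\<lfloor>(t - a) / real T\<rfloor> = -1" using that True TT h unfolding c0_def by (intro flm1) auto
    moreover have "\<lfloor>(t - a - h) / real T\<rfloor> = -1" using that \<open>t < a + h\<close> TT h rho unfolding c0_def by (intro flm1) auto
    ultimately show ?thesis unfolding D_def dl_def by simp
  next
    case False
    have "\<lfloor>(t - a) / real T\<rfloor> = 0" using that False TT h unfolding c0_def by (intro fl0) auto
    moreover have "\<lfloor>(t - a - h) / real T\<rfloor> = 0" using that False TT h rho unfolding c0_def by (intro fl0) auto
    ultimately show ?thesis unfolding D_def dl_def by simp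
  qed
  have IW: "I \<subseteq> {c0..<c0 + real T}" unfolding I_def c0_def using h rho by auto
  have K'eq: "K' t y = ennreal (\<bar>u t - u y + (D t - D y)\<bar> powr p / \<bar>t - y\<bar> powr q)" for t y
    unfolding K'_def Kf_def x'_def u_def D_def a_def q_def using u_conf_rigid[OF i] by (simp add: algebra_simps)
  have Keq: "K t y = ennreal (\<bar>u t - u y\<bar> powr p / \<bar>t - y\<bar> powr q)" for t y
    unfolding K_def Kf_def u_def q_def by simp
  have Dm[measurable]: "D \<in> borel_measurable borel" unfolding D_def by measurable
  have Dper: "D (t + real T) = D t" for t unfolding D_def by (rule dl_periodic[OF T])
  have D01: "(D t \<noteq> 0 \<and> D y = 0) \<or> (D t = 0 \<and> D y \<noteq> 0)" if "D t \<noteq> D y" for t y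
    using Dvals[of t] Dvals[of y] that by auto
  define E where "E = (\<integral>\<^sup>+t. (\<integral>\<^sup>+y. K t y * of_bool (D t = D y) \<partial>lborel) * indicator {0..<real T} t \<partial>lborel)"
  define P where "P = (\<integral>\<^sup>+t. (\<integral>\<^sup>+y. K t y * of_bool (D t \<noteq> 0 \<and> D y = 0) \<partial>lborel) * indicator {c0..<c0 + real T} t \<partial>lborel)"
  define P' where "P' = (\<integral>\<^sup>+t. (\<integral>\<^sup>+y. K' t y * of_bool (D t \<noteq> 0 \<and> D y = 0) \<partial>lborel) * indicator {c0..<c0 + real T} t \<partial>lborel)"
  have FFx: "FF s p T x = E + 2 * P"
    unfolding FF_def E_def P_def K_def[symmetric]
    by (rule decomp) (auto simp: K_def Kf_sym Kf_periodic[OF T] Dper D01 T)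
  have FFx': "FF s p T x' = E + 2 * P'"
  proof -
    have "FF s p T x' = (\<integral>\<^sup>+t. (\<integral>\<^sup>+y. K' t y * of_bool (D t = D y) \<partial>lborel) * indicator {0..<real T} t \<partial>lborel) + 2 * P'"
      unfolding FF_def P'_def K'_def[symmetric]
      by (rule decomp) (auto simp: K'_def Kf_sym Kf_periodic[OF T] Dper D01 T)
    also have "(\<lambda>t y. K' t y * of_bool (D t = D y)) = (\<lambda>t y. K t y * of_bool (D t = D y))"
      by (intro ext) (auto simp: K'eq Keq)
    finally show ?thesis unfolding E_def .
  qed
  have fin: "FF s p T x < \<infinity>" by (rule FF_finite[OF T s(1) s(2) _ sp x]) (use p in simp)
  have ul: "u y - u z = (y - z) + m * (of_bool (y < a) - of_bool (z < a))" if "\<bar>y - a\<bar> < \<rho>" "\<bar>z - a\<bar> < \<rho>" for y z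
    unfolding u_def m[symmetric] a_def
    by (rule u_local[OF T x]) (use a0 rho TT that in \<open>auto simp: a_def\<close>)
  have restr: "(\<integral>\<^sup>+y. Q t y * of_bool (D t \<noteq> 0 \<and> D y = 0) \<partial>lborel) * indicator {c0..<c0 + real T} t
      = (\<integral>\<^sup>+y. Q t y * of_bool (D y = 0) \<partial>lborel) * indicator I t" for Q :: "real \<Rightarrow> real \<Rightarrow> ennreal" and t
  proof (cases "t \<in> I")
    case True
    then show ?thesis using IW dI[OF True] by (auto simp: indicator_def)
  next
    case False
    show ?thesis
    proof (cases "t \<in> {c0..<c0 + real T}")
      case True
      then show ?thesis using dW[OF True False] False by (simp add: indicator_def)
    qed (use False in \<open>simp add: indicator_def\<close>)
  qed
  have PI: "P = (\<integral>\<^sup>+t. (\<integral>\<^sup>+y. K t y * of_bool (D y = 0) \<partial>lborel) * indicator I t \<partial>lborel)"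
    unfolding P_def by (intro nn_integral_cong) (rule restr)
  have P'I: "P' = (\<integral>\<^sup>+t. (\<integral>\<^sup>+y. K' t y * of_bool (D y = 0) \<partial>lborel) * indicator I t \<partial>lborel)"
    unfolding P'_def by (intro nn_integral_cong) (rule restr)
  have tI: "\<bar>t - a\<bar> \<le> - h" "a + h \<le> t" "t < a" if "t \<in> I" for t using that unfolding I_def by auto
  have U: "(\<integral>\<^sup>+y. K' t y * of_bool (D y = 0) \<partial>lborel)
      \<le> (\<integral>\<^sup>+y. K' t y * indicator L y \<partial>lborel) + (\<integral>\<^sup>+y. w t y * indicator Rg y \<partial>lborel) + ennreal (real T powr p) * ennreal Mr"
    if t: "t \<in> I" for t
  proof -
    have pw: "K' t y * of_bool (D y = 0) \<le> K' t y * indicator L y + w t y * indicator Rg y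
       + ennreal (real T powr p * \<bar>t - y\<bar> powr (- q)) * indicator {z. \<rho> / 2 \<le> \<bar>z\<bar>} (y - t)" for y
    proof (cases "D y = 0")
      case False then show ?thesis by simp
    next
      case Dy: True
      consider "y \<in> L" | "y \<in> Rg" | "y \<notin> L" "y \<notin> Rg" by blast
      then show ?thesis
      proof cases
        case 1 then show ?thesis by (intro add_increasing2) (auto simp: indicator_def)
      next
        case 2
        then have y: "\<bar>y - a\<bar> < \<rho>" "a - \<rho> < y" "y < a + h" unfolding Rg_def using h by auto
        have "u t - u y = t - y" using ul[of t y] y tI[OF t] h by auto
        then have "K' t y = ennreal (\<bar>t - y - 1\<bar> powr p / \<bar>t - y\<bar> powr q)"
          using K'eq[of t y] dI[OF t] Dy by simp
        also have "\<dots> \<le> ennreal (1 / \<bar>t - y\<bar> powr q)"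
        proof (intro ennreal_leI divide_right_mono powr_le1)
          show "\<bar>\<bar>t - y - 1\<bar>\<bar> \<le> 1" using y tI[OF t] rho by auto
        qed (use p in auto)
        also have "\<dots> = w t y" unfolding w_def by (simp add: powr_minus_divide)
        finally show ?thesis using 2 by (intro add_increasing2 add_increasing) (auto simp: indicator_def)
      next
        case 3
        have far: "\<rho> / 2 \<le> \<bar>y - t\<bar>"
        proof (cases "\<bar>y - a\<bar> < \<rho>")
          case True
          have "y \<notin> I" using dI Dy by auto
          then show ?thesis using True 3 unfolding L_def Rg_def I_def by auto
        next
          case False
          have "\<bar>y - a\<bar> \<le> \<bar>y - t\<bar> + \<bar>t - a\<bar>" using abs_triangle_ineq[of "y - t" "t - a"] by simp
          then show ?thesis using False tI[OF t] h by linarith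
        qed
        have "K' t y \<le> ennreal (real T powr p * \<bar>t - y\<bar> powr (- q))"
          unfolding K'_def q_def using Kf_le_far[OF T] p by simp
        then show ?thesis using far Dy by (intro add_increasing) (auto simp: indicator_def)
      qed
    qed
    have "(\<integral>\<^sup>+y. K' t y * of_bool (D y = 0) \<partial>lborel) \<le> (\<integral>\<^sup>+y. K' t y * indicator L y + w t y * indicator Rg y
       + ennreal (real T powr p * \<bar>t - y\<bar> powr (- q)) * indicator {z. \<rho> / 2 \<le> \<bar>z\<bar>} (y - t) \<partial>lborel)"
      by (intro nn_integral_mono pw)
    also have "\<dots> = (\<integral>\<^sup>+y. K' t y * indicator L y \<partial>lborel) + (\<integral>\<^sup>+y. w t y * indicator Rg y \<partial>lborel)
       + (\<integral>\<^sup>+y. ennreal (real T powr p * \<bar>t - y\<bar> powr (- q)) * indicator {z. \<rho> / 2 \<le> \<bar>z\<bar>} (y - t) \<partial>lborel)"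
    proof -
      have mA: "(\<lambda>y. K' t y * indicator L y) \<in> borel_measurable lborel" unfolding K'_def L_def by measurable
      have mB: "(\<lambda>y. w t y * indicator Rg y) \<in> borel_measurable lborel" unfolding w_def Rg_def by measurable
      have mC: "(\<lambda>y. ennreal (real T powr p * \<bar>t - y\<bar> powr (- q)) * indicator {z. \<rho> / 2 \<le> \<bar>z\<bar>} (y - t)) \<in> borel_measurable lborel"
        by measurable
      show ?thesis by (simp only: nn_integral_add[OF borel_measurable_add[OF mA mB] mC] nn_integral_add[OF mA mB])
    qed
    also have "(\<integral>\<^sup>+y. ennreal (real T powr p * \<bar>t - y\<bar> powr (- q)) * indicator {z. \<rho> / 2 \<le> \<bar>z\<bar>} (y - t) \<partial>lborel)
        = ennreal (real T powr p) * ennreal Mr"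
    proof -
      have "(\<integral>\<^sup>+y. ennreal (real T powr p * \<bar>t - y\<bar> powr (- q)) * indicator {z. \<rho> / 2 \<le> \<bar>z\<bar>} (y - t) \<partial>lborel)
          = (\<integral>\<^sup>+y. ennreal (real T powr p * \<bar>t - (y + t)\<bar> powr (- q)) * indicator {z. \<rho> / 2 \<le> \<bar>z\<bar>} (y + t - t) \<partial>lborel)"
        by (rule nn_shift) measurable
      also have "\<dots> = (\<integral>\<^sup>+y. ennreal (real T powr p) * (ennreal (\<bar>y\<bar> powr (- q)) * indicator {z. \<rho> / 2 \<le> \<bar>z\<bar>} y) \<partial>lborel)"
        by (intro nn_integral_cong) (simp add: ennreal_mult mult.assoc)
      also have "\<dots> = ennreal (real T powr p) * (\<integral>\<^sup>+y. ennreal (\<bar>y\<bar> powr (- q)) * indicator {z. \<rho> / 2 \<le> \<bar>z\<bar>} y \<partial>lborel)"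
        by (rule nn_integral_cmult) measurable
      also have "\<dots> = ennreal (real T powr p) * ennreal Mr" unfolding q_def by (simp only: Mf(1))
      finally show ?thesis .
    qed
    finally show ?thesis .
  qed
  have Lo: "(\<integral>\<^sup>+y. K' t y * indicator L y \<partial>lborel) + ennreal (1 + \<eta>) * (\<integral>\<^sup>+y. w t y * indicator L y \<partial>lborel)
      \<le> (\<integral>\<^sup>+y. K t y * of_bool (D y = 0) \<partial>lborel)" if t: "t \<in> I" for t
  proof -
    have pw: "(K' t y + ennreal (1 + \<eta>) * w t y) * indicator L y \<le> K t y * of_bool (D y = 0)" for y
    proof (cases "y \<in> L")
      case False then show ?thesis by simp
    next
      case True
      have y: "\<bar>y - a\<bar> < \<rho>" "a \<le> y" "y < a + \<rho>" using True rho unfolding L_def by auto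
      have Dy: "D y = 0" using y rho TT by (intro dW) (auto simp: I_def c0_def)
      have uu: "u t - u y = t - y + m" using ul[of t y] y tI[OF t] h by auto
      define d where "d = y - t"
      have d: "0 < d" "d \<le> d0" using y tI[OF t] h rho unfolding d_def by auto
      have g: "\<bar>m - 1 - d\<bar> powr p + (1 + \<eta>) \<le> \<bar>m - d\<bar> powr p" using gain d by auto
      have K'v: "K' t y = ennreal (\<bar>m - 1 - d\<bar> powr p / d powr q)"
      proof -
        have "\<bar>u t - u y + (D t - D y)\<bar> = \<bar>m - 1 - d\<bar>" using uu dI[OF t] Dy unfolding d_def by simp
        then show ?thesis using K'eq[of t y] d unfolding d_def by (simp add: abs_minus_commute)
      qed
      have Kv: "K t y = ennreal (\<bar>m - d\<bar> powr p / d powr q)"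
      proof -
        have "\<bar>u t - u y\<bar> = \<bar>m - d\<bar>" using uu unfolding d_def by simp
        then show ?thesis using Keq[of t y] d unfolding d_def by (simp add: abs_minus_commute)
      qed
      have wv: "w t y = ennreal (1 / d powr q)" using d unfolding w_def d_def by (simp add: powr_minus_divide abs_minus_commute)
      have "\<bar>m - 1 - d\<bar> powr p / d powr q + (1 + \<eta>) * (1 / d powr q) = (\<bar>m - 1 - d\<bar> powr p + (1 + \<eta>)) / d powr q"
        by (simp add: add_divide_distrib)
      also have "\<dots> \<le> \<bar>m - d\<bar> powr p / d powr q" using g d by (intro divide_right_mono) auto
      finally have r: "\<bar>m - 1 - d\<bar> powr p / d powr q + (1 + \<eta>) * (1 / d powr q) \<le> \<bar>m - d\<bar> powr p / d powr q" .
      have "K' t y + ennreal (1 + \<eta>) * w t y = ennreal (\<bar>m - 1 - d\<bar> powr p / d powr q + (1 + \<eta>) * (1 / d powr q))"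
      proof -
        have e1: "ennreal (1 + \<eta>) * ennreal (1 / d powr q) = ennreal ((1 + \<eta>) * (1 / d powr q))"
          by (rule ennreal_mult[symmetric]) (use eta in auto)
        have e2: "ennreal (\<bar>m - 1 - d\<bar> powr p / d powr q) + ennreal ((1 + \<eta>) * (1 / d powr q))
            = ennreal (\<bar>m - 1 - d\<bar> powr p / d powr q + (1 + \<eta>) * (1 / d powr q))"
          by (rule ennreal_plus[symmetric]) (use eta in auto)
        show ?thesis unfolding K'v wv e1 e2 ..
      qed
      also have "\<dots> \<le> K t y" unfolding Kv using r by (rule ennreal_leI)
      finally show ?thesis using True Dy by simp
    qed
    have mA: "(\<lambda>y. K' t y * indicator L y) \<in> borel_measurable lborel" unfolding K'_def L_def by measurable
    have mB: "(\<lambda>y. w t y * indicator L y) \<in> borel_measurable lborel" unfolding w_def L_def by measurable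
    have "(\<integral>\<^sup>+y. K' t y * indicator L y \<partial>lborel) + ennreal (1 + \<eta>) * (\<integral>\<^sup>+y. w t y * indicator L y \<partial>lborel)
        = (\<integral>\<^sup>+y. K' t y * indicator L y + ennreal (1 + \<eta>) * (w t y * indicator L y) \<partial>lborel)"
      by (simp only: nn_integral_add[OF mA] nn_integral_cmult[OF mB] borel_measurable_times_ennreal[OF borel_measurable_const mB])
    also have "\<dots> \<le> (\<integral>\<^sup>+y. K t y * of_bool (D y = 0) \<partial>lborel)"
      by (intro nn_integral_mono) (use pw in \<open>simp add: distrib_right mult.assoc\<close>)
    finally show ?thesis .
  qed
  define N' where "N' = (\<integral>\<^sup>+t. (\<integral>\<^sup>+y. K' t y * indicator L y \<partial>lborel) * indicator I t \<partial>lborel)"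
  define R where "R = (\<integral>\<^sup>+t. (\<integral>\<^sup>+y. w t y * indicator Rg y \<partial>lborel) * indicator I t \<partial>lborel)"
  define J where "J = (\<integral>\<^sup>+t. (\<integral>\<^sup>+y. w t y * indicator L y \<partial>lborel) * indicator I t \<partial>lborel)"
  have mw[measurable]: "case_prod w \<in> borel_measurable (lborel \<Otimes>\<^sub>M lborel)" unfolding w_def by measurable
  have mK'[measurable]: "case_prod K' \<in> borel_measurable (lborel \<Otimes>\<^sub>M lborel)" unfolding K'_def by measurable
  have mK[measurable]: "case_prod K \<in> borel_measurable (lborel \<Otimes>\<^sub>M lborel)" unfolding K_def by measurable
  have mN: "(\<lambda>t. (\<integral>\<^sup>+y. K' t y * indicator L y \<partial>lborel) * indicator I t) \<in> borel_measurable lborel"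
    unfolding L_def I_def by measurable
  have mR: "(\<lambda>t. (\<integral>\<^sup>+y. w t y * indicator Rg y \<partial>lborel) * indicator I t) \<in> borel_measurable lborel"
    unfolding Rg_def I_def by measurable
  have mJ: "(\<lambda>t. (\<integral>\<^sup>+y. w t y * indicator L y \<partial>lborel) * indicator I t) \<in> borel_measurable lborel"
    unfolding L_def I_def by measurable
  have mI: "(\<lambda>t. ennreal (real T powr p) * ennreal Mr * indicator I t) \<in> borel_measurable lborel"
    unfolding I_def by measurable
  have b1: "P' \<le> N' + R + ennreal (real T powr p * Mr * (- h))"
  proof -
    have "P' \<le> (\<integral>\<^sup>+t. (\<integral>\<^sup>+y. K' t y * indicator L y \<partial>lborel) * indicator I t + (\<integral>\<^sup>+y. w t y * indicator Rg y \<partial>lborel) * indicator I t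
        + ennreal (real T powr p) * ennreal Mr * indicator I t \<partial>lborel)"
      unfolding P'I
    proof (intro nn_integral_mono)
      fix t
      show "(\<integral>\<^sup>+y. K' t y * of_bool (D y = 0) \<partial>lborel) * indicator I t
        \<le> (\<integral>\<^sup>+y. K' t y * indicator L y \<partial>lborel) * indicator I t + (\<integral>\<^sup>+y. w t y * indicator Rg y \<partial>lborel) * indicator I t
        + ennreal (real T powr p) * ennreal Mr * indicator I t"
        using U[of t] by (cases "t \<in> I") auto
    qed
    also have "\<dots> = N' + R + (\<integral>\<^sup>+t. ennreal (real T powr p) * ennreal Mr * indicator I t \<partial>lborel)"
      unfolding N'_def R_def
      by (simp only: nn_integral_add[OF borel_measurable_add[OF mN mR] mI] nn_integral_add[OF mN mR])
    also have "(\<integral>\<^sup>+t. ennreal (real T powr p) * ennreal Mr * indicator I t \<partial>lborel) = ennreal (real T powr p * Mr * (- h))"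
    proof -
      have e: "ennreal (real T powr p * Mr * (- h)) = ennreal (real T powr p) * ennreal Mr * ennreal (- h)"
        using ennreal_mult[of "real T powr p * Mr" "- h"] ennreal_mult[of "real T powr p" Mr] h Mf(2) by simp
      show ?thesis unfolding I_def e using h by (simp add: nn_integral_cmult_indicator)
    qed
    finally show ?thesis .
  qed
  have b2: "N' + ennreal (1 + \<eta>) * J \<le> P"
  proof -
    have "N' + ennreal (1 + \<eta>) * J = (\<integral>\<^sup>+t. (\<integral>\<^sup>+y. K' t y * indicator L y \<partial>lborel) * indicator I t
       + ennreal (1 + \<eta>) * ((\<integral>\<^sup>+y. w t y * indicator L y \<partial>lborel) * indicator I t) \<partial>lborel)"
      unfolding N'_def J_def
      by (simp only: nn_integral_add[OF mN borel_measurable_times_ennreal[OF borel_measurable_const mJ]] nn_integral_cmult[OF mJ])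
    also have "\<dots> \<le> P" unfolding PI
    proof (intro nn_integral_mono)
      fix t
      show "(\<integral>\<^sup>+y. K' t y * indicator L y \<partial>lborel) * indicator I t
       + ennreal (1 + \<eta>) * ((\<integral>\<^sup>+y. w t y * indicator L y \<partial>lborel) * indicator I t)
       \<le> (\<integral>\<^sup>+y. K t y * of_bool (D y = 0) \<partial>lborel) * indicator I t"
        using Lo[of t] by (cases "t \<in> I") auto
    qed
    finally show ?thesis .
  qed
  have b3: "R \<le> J" unfolding R_def J_def w_def I_def
  proof (rule refl_le)
    fix y assume "y \<in> Rg"
    then show "a + h + a - y \<in> L \<or> a + h + a - y = a" unfolding Rg_def L_def using h by auto
  qed (auto simp: Rg_def L_def)
  have b4: "ennreal ((- h) * (- h) * (2 * (- h)) powr (- q)) \<le> J"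
  proof -
    have "(\<integral>\<^sup>+t. (\<integral>\<^sup>+y. ennreal ((2 * (- h)) powr (- q)) * indicator {a..<a-h} y \<partial>lborel) * indicator I t \<partial>lborel) \<le> J"
      unfolding J_def
    proof (intro nn_integral_mono)
      fix t
      show "(\<integral>\<^sup>+y. ennreal ((2 * (- h)) powr (- q)) * indicator {a..<a-h} y \<partial>lborel) * indicator I t
          \<le> (\<integral>\<^sup>+y. w t y * indicator L y \<partial>lborel) * indicator I t"
      proof (cases "t \<in> I")
        case tI: True
        have "(\<integral>\<^sup>+y. ennreal ((2 * (- h)) powr (- q)) * indicator {a..<a-h} y \<partial>lborel) \<le> (\<integral>\<^sup>+y. w t y * indicator L y \<partial>lborel)"
        proof (intro nn_integral_mono)
          fix y
          show "ennreal ((2 * (- h)) powr (- q)) * indicator {a..<a-h} y \<le> w t y * indicator L y"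
          proof (cases "y \<in> {a..<a-h}")
            case True
            then have "0 < \<bar>t - y\<bar>" "\<bar>t - y\<bar> \<le> 2 * (- h)" using tI unfolding I_def by auto
            then have "(2 * (- h)) powr (- q) \<le> \<bar>t - y\<bar> powr (- q)" using q1 by (intro powr_mono2') auto
            moreover have "y \<in> L" using True h rho unfolding L_def by auto
            ultimately show ?thesis using True unfolding w_def by (simp add: ennreal_leI)
          qed simp
        qed
        then show ?thesis using tI by simp
      qed simp
    qed
    moreover have "(\<integral>\<^sup>+t. (\<integral>\<^sup>+y. ennreal ((2 * (- h)) powr (- q)) * indicator {a..<a-h} y \<partial>lborel) * indicator I t \<partial>lborel)
        = ennreal ((- h) * (- h) * (2 * (- h)) powr (- q))"
    proof -
      define cc where "cc = (2 * (- h)) powr (- q)"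
      have cc: "cc \<ge> 0" unfolding cc_def by simp
      have i1: "(\<integral>\<^sup>+y. ennreal cc * indicator {a..<a-h} y \<partial>lborel) = ennreal cc * ennreal (- h)"
        using h by (simp add: nn_integral_cmult_indicator)
      have i2: "(\<integral>\<^sup>+t. (ennreal cc * ennreal (- h)) * indicator {a+h..<a} t \<partial>lborel) = ennreal cc * ennreal (- h) * ennreal (- h)"
        using h by (simp add: nn_integral_cmult_indicator)
      have e: "ennreal ((- h) * (- h) * cc) = ennreal cc * ennreal (- h) * ennreal (- h)"
        using ennreal_mult[of "(- h) * (- h)" cc] ennreal_mult[of "- h" "- h"] h cc by (simp add: mult_ac)
      show ?thesis unfolding I_def cc_def[symmetric] i1 i2 e ..
    qed
    ultimately show ?thesis by simp
  qed
  have "enn2real (FF s p T x') - enn2real (FF s p T x) \<le> 2 * (real T powr p * Mr * (- h)) - 2 * \<eta> * ((- h) * (- h) * (2 * (- h)) powr (- q))"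
    by (rule assemble[OF FFx FFx' fin b1 b2 b3 b4 eta]) (use Mf(2) h in \<open>auto intro!: mult_nonneg_nonpos\<close>)
  then show ?thesis unfolding F_energy_FF x'_def q_def .
qed



lemma lim_pos:
  fixes f :: "real \<Rightarrow> real"
  assumes c: "c > 0" and a: "a > 0" and h0: "h0 > 0"
    and b: "\<And>h. 0 < h \<Longrightarrow> h < h0 \<Longrightarrow> f h \<le> C - c * h powr (- a)"
  shows "filterlim f at_bot (at_right 0)"
proof -
  have g: "filterlim (\<lambda>h. C - c * h powr (- a)) at_bot (at_right 0)"
    using c a by real_asymp
  have ev: "eventually (\<lambda>h. f h \<le> C - c * h powr (- a)) (at_right 0)"
    unfolding eventually_at_right_field using h0 b by auto
  show ?thesis unfolding filterlim_at_bot
  proof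
    fix Z
    from g have "eventually (\<lambda>h. C - c * h powr (- a) \<le> Z) (at_right 0)" unfolding filterlim_at_bot by blast
    with ev show "eventually (\<lambda>h. f h \<le> Z) (at_right 0)" by eventually_elim auto
  qed
qed

lemma lim_neg:
  fixes f :: "real \<Rightarrow> real"
  assumes c: "c > 0" and a: "a > 0" and h0: "h0 > 0"
    and b: "\<And>h. - h0 < h \<Longrightarrow> h < 0 \<Longrightarrow> - C + c * (- h) powr (- a) \<le> f h"
  shows "filterlim f at_top (at_left 0)"
proof -
  have g: "filterlim (\<lambda>h. - C + c * (- h) powr (- a)) at_top (at_left 0)"
    using c a by real_asymp
  have ev: "eventually (\<lambda>h. - C + c * (- h) powr (- a) \<le> f h) (at_left 0)"
    unfolding eventually_at_left_field using h0 b by (intro exI[of _ "- h0"]) auto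
  show ?thesis unfolding filterlim_at_top
  proof
    fix Z
    from g have "eventually (\<lambda>h. Z \<le> - C + c * (- h) powr (- a)) (at_left 0)" unfolding filterlim_at_top by blast
    with ev show "eventually (\<lambda>h. Z \<le> f h) (at_left 0)" by eventually_elim auto
  qed
qed



theorem mainTheorem6:
  fixes s p :: real and T :: nat and x :: "nat \<Rightarrow> real" and i :: nat
  assumes "0 < s" "s < 1" "1 < p" "s * p < 1"
    and "\<forall>j\<in>{1..T}. 0 \<le> x j \<and> x j < real T"
    and "\<forall>j\<in>{1..T}. \<forall>k\<in>{1..T}. j \<le> k \<longrightarrow> x j \<le> x k"
    and "i \<in> {1..T}"
    and "card {j\<in>{1..T}. x j = x i} > 1"
  shows "filterlim (\<lambda>h. (F_energy s p T (rigid_var x i h) - F_energy s p T x) / h)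
            at_bot (at_right 0) \<and>
         filterlim (\<lambda>h. (F_energy s p T (rigid_var x i h) - F_energy s p T x) / h)
            at_top (at_left 0)"
proof -
  note s = assms(1,2) and p = assms(3) and sp = assms(4) and x = assms(5) and i = assms(7)
  have T: "T > 0" using i by auto
  define m where "m = real (card {j\<in>{1..T}. x j = x i})"
  have m2: "m \<ge> 2" using assms(8) unfolding m_def by simp
  obtain \<eta> d0 where eta: "\<eta> > 0" and d0: "d0 > 0"
    and gain: "\<forall>d. 0 \<le> d \<and> d \<le> d0 \<longrightarrow> \<bar>m - 1 - d\<bar> powr p + (1 + \<eta>) \<le> \<bar>m - d\<bar> powr p"
    using gain[OF m2 p] by blast
  have a0: "0 \<le> x i" "x i < real T" using x i by auto
  obtain \<rho>1 where rho1: "\<rho>1 > 0" "\<rho>1 \<le> real T / 4" "\<rho>1 \<le> d0 / 2"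
      "\<forall>j\<in>{1..T}. x j \<noteq> x i \<longrightarrow> \<rho>1 \<le> \<bar>x j - x i\<bar> \<and> \<rho>1 \<le> real T - \<bar>x j - x i\<bar>"
    using exists_rho[OF T d0 x a0] by blast
  define \<rho> where "\<rho> = min \<rho>1 1"
  have rho: "\<rho> > 0" "\<rho> \<le> real T / 4" "\<rho> \<le> d0 / 2" "\<rho> \<le> 1"
      "\<forall>j\<in>{1..T}. x j \<noteq> x i \<longrightarrow> \<rho> \<le> \<bar>x j - x i\<bar> \<and> \<rho> \<le> real T - \<bar>x j - x i\<bar>"
    using rho1 unfolding \<rho>_def by auto
  define q where "q = 1 + s * p"
  have "(\<integral>\<^sup>+z. ennreal (\<bar>z\<bar> powr (- q)) * indicator {z. \<rho> / 2 \<le> \<bar>z\<bar>} z \<partial>lborel) < \<infinity>"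
    by (rule powr_int_inf) (use s p rho in \<open>auto simp: q_def\<close>)
  then obtain Mr where Mf: "(\<integral>\<^sup>+z. ennreal (\<bar>z\<bar> powr (- q)) * indicator {z. \<rho> / 2 \<le> \<bar>z\<bar>} z \<partial>lborel) = ennreal Mr" "Mr \<ge> 0"
    by (auto simp: less_top_ennreal)
  define C where "C = 2 * (real T powr p * Mr)"
  define c where "c = 2 * \<eta> * 2 powr (- q)"
  have c: "c > 0" unfolding c_def using eta by simp
  have spp: "s * p > 0" using s p by simp
  have ident: "l * l * (2 * l) powr (- q) = l * (2 powr (- q) * l powr (- (s * p)))" if l: "l > 0" for l
  proof -
    have "(2 * l) powr (- q) = 2 powr (- q) * l powr (- q)" using l by (simp add: powr_mult)
    moreover have "l * l powr (- q) = l powr (- (s * p))"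
      using l by (simp add: powr_add[symmetric] q_def powr_mult_base)
    ultimately show ?thesis by (simp add: mult_ac)
  qed
  define f where "f = (\<lambda>h. (F_energy s p T (rigid_var x i h) - F_energy s p T x) / h)"
  have pos: "f h \<le> C - c * h powr (- (s * p))" if h: "0 < h" "h < \<rho> / 2" for h
  proof -
    have "F_energy s p T (rigid_var x i h) - F_energy s p T x
       \<le> 2 * (real T powr p * Mr * h) - 2 * \<eta> * (h * h * (2 * h) powr (- (1 + s * p)))"
      by (rule per_h_pos[OF T s p sp x i m_def[symmetric] gain eta rho _ Mf(2) h]) (use Mf(1) in \<open>simp add: q_def\<close>)
    also have "\<dots> = h * (C - c * h powr (- (s * p)))"
      unfolding C_def c_def q_def[symmetric] ident[OF h(1)] by (simp add: algebra_simps)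
    finally show ?thesis unfolding f_def using h by (simp add: divide_le_eq mult.commute)
  qed
  have neg: "- C + c * (- h) powr (- (s * p)) \<le> f h" if h: "- (\<rho> / 2) < h" "h < 0" for h
  proof -
    have "F_energy s p T (rigid_var x i h) - F_energy s p T x
       \<le> 2 * (real T powr p * Mr * (- h)) - 2 * \<eta> * ((- h) * (- h) * (2 * (- h)) powr (- (1 + s * p)))"
      by (rule per_h_neg[OF T s p sp x i m_def[symmetric] gain eta rho _ Mf(2)]) (use Mf(1) h in \<open>auto simp: q_def\<close>)
    also have "\<dots> = (- h) * (C - c * (- h) powr (- (s * p)))"
    proof -
      have hp: "- h > 0" using h by simp
      show ?thesis unfolding C_def c_def q_def[symmetric] ident[OF hp] by (simp add: algebra_simps)
    qed
    finally show ?thesis unfolding f_def using h by (simp add: le_divide_eq algebra_simps)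
  qed
  have "filterlim f at_bot (at_right 0)"
    by (rule lim_pos[OF c spp, of "\<rho> / 2"]) (use rho pos in auto)
  moreover have "filterlim f at_top (at_left 0)"
    by (rule lim_neg[OF c spp, of "\<rho> / 2"]) (use rho neg in auto)
  ultimately show ?thesis unfolding f_def by blast
qed

end
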